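(* Let $-\infty\le a<b\le\infty$, let $\kappa,\varphi:(a,b)\to\mathbb C$ be measurable with $\kappa\in L^2(a,b)$ and $\mathbb 1_{(a,c)}\varphi\in L^2(a,b)$ for every $c\in(a,b)$, and let $T$ be the integral operator in $L^2(a,b)$, $(Tf)(t)=\varphi(t)\int_t^b f(s)\overline{\kappa(s)}\,ds$, on its maximal domain. Choose $c_0:=a<c_1<c_2<\dots<b$ with $\|\mathbb 1_{(c_n,b)}\kappa\|^2=2^{-n}\|\kappa\|^2$, and set $J_n=(c_{n-1},c_n)$, $\omega_n=\|\mathbb 1_{J_n}\kappa\|\cdot\|\mathbb 1_{J_n}\varphi\|$. Then: $T$ bounded $\Rightarrow$ $\operatorname{Re}T$ bounded $\Rightarrow$ $\sup_{n\in\mathbb N}\omega_n<\infty$ $\Rightarrow$ $T$ bounded. In particular these three statements are equivalent.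
   Context: Norms are $L^2(a,b)$-norms; $\mathbb 1_E$ is the indicator function of $E$; $T$ is a closed, possibly unbounded operator. *)

theory Defs
  imports "HOL-Analysis.Analysis"
begin

definition Ioo_e :: "ereal \<Rightarrow> ereal \<Rightarrow> real set" where
  "Ioo_e a b = {x. a < ereal x \<and> ereal x < b}"

definition L2 :: "ereal \<Rightarrow> ereal \<Rightarrow> (real \<Rightarrow> complex) \<Rightarrow> bool" where
  "L2 a b f \<longleftrightarrow> f \<in> borel_measurable (lebesgue_on (Ioo_e a b)) \<and>
     integrable (lebesgue_on (Ioo_e a b)) (\<lambda>x. (cmod (f x))\<^sup>2)"

definition L2norm :: "ereal \<Rightarrow> ereal \<Rightarrow> (real \<Rightarrow> complex) \<Rightarrow> real" where
  "L2norm a b f = sqrt (integral\<^sup>L (lebesgue_on (Ioo_e a b)) (\<lambda>x. (cmod (f x))\<^sup>2))"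

definition L2inner :: "ereal \<Rightarrow> ereal \<Rightarrow> (real \<Rightarrow> complex) \<Rightarrow> (real \<Rightarrow> complex) \<Rightarrow> complex" where
  "L2inner a b f g = integral\<^sup>L (lebesgue_on (Ioo_e a b)) (\<lambda>x. f x * cnj (g x))"

definition intop :: "ereal \<Rightarrow> (real \<Rightarrow> complex) \<Rightarrow> (real \<Rightarrow> complex) \<Rightarrow> (real \<Rightarrow> complex) \<Rightarrow> (real \<Rightarrow> complex)" where
  "intop b \<phi> \<kappa> f = (\<lambda>t. \<phi> t * integral\<^sup>L (lebesgue_on (Ioo_e (ereal t) b)) (\<lambda>s. f s * cnj (\<kappa> s)))"

definition intop_dom :: "ereal \<Rightarrow> ereal \<Rightarrow> (real \<Rightarrow> complex) \<Rightarrow> (real \<Rightarrow> complex) \<Rightarrow> (real \<Rightarrow> complex) set" where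
  "intop_dom a b \<phi> \<kappa> = {f. L2 a b f \<and> L2 a b (intop b \<phi> \<kappa> f)}"

definition op_bounded :: "ereal \<Rightarrow> ereal \<Rightarrow> (real \<Rightarrow> complex) set \<Rightarrow> ((real \<Rightarrow> complex) \<Rightarrow> (real \<Rightarrow> complex)) \<Rightarrow> bool" where
  "op_bounded a b D A \<longleftrightarrow> (\<exists>C. \<forall>f\<in>D. L2norm a b (A f) \<le> C * L2norm a b f)"

text \<open>g is in the domain of the adjoint A* with A* g = h.\<close>
definition adjoint_pair :: "ereal \<Rightarrow> ereal \<Rightarrow> (real \<Rightarrow> complex) set \<Rightarrow> ((real \<Rightarrow> complex) \<Rightarrow> (real \<Rightarrow> complex)) \<Rightarrow> (real \<Rightarrow> complex) \<Rightarrow> (real \<Rightarrow> complex) \<Rightarrow> bool" where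
  "adjoint_pair a b D A g h \<longleftrightarrow> L2 a b g \<and> L2 a b h \<and>
     (\<forall>f\<in>D. L2inner a b (A f) g = L2inner a b f h)"

text \<open>Re A = (A + A*)/2 on D(A) \<inter> D(A*) is bounded.\<close>
definition re_op_bounded :: "ereal \<Rightarrow> ereal \<Rightarrow> (real \<Rightarrow> complex) set \<Rightarrow> ((real \<Rightarrow> complex) \<Rightarrow> (real \<Rightarrow> complex)) \<Rightarrow> bool" where
  "re_op_bounded a b D A \<longleftrightarrow> (\<exists>C. \<forall>f h. f \<in> D \<and> adjoint_pair a b D A f h \<longrightarrow>
       L2norm a b (\<lambda>x. (A f x + h x) / 2) \<le> C * L2norm a b f)"

end

theory Submission
  imports Defs
begin

lemma UN_Icc_real: "(\<Union>n::nat. {-real n..real n}) = UNIV"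
proof (rule set_eqI, rule iffI)
  fix x :: real
  obtain n :: nat where "\<bar>x\<bar> \<le> real n" using real_arch_simple by blast
  then have "x \<in> {-real n..real n}" by auto
  then show "x \<in> (\<Union>n::nat. {-real n..real n})" by blast
qed simp

lemma sigma_finite_lebesgue: "sigma_finite_measure (lebesgue :: real measure)"
  unfolding sigma_finite_measure_def
  by (intro exI[of _ "range (\<lambda>n::nat. {-real n..real n})"] conjI) (auto simp: UN_Icc_real)

lemma Ioo_e_sets[measurable]: "Ioo_e x y \<in> sets lborel"
  unfolding Ioo_e_def by measurable

lemma Ioo_e_sets_leb[measurable]: "Ioo_e x y \<in> sets lebesgue"
  by (rule sets_completionI_sets) (metis Ioo_e_sets)

lemma sigma_finite_LI: "sigma_finite_measure (lebesgue_on S)" if "(S::real set) \<in> sets lebesgue"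
  using sigma_finite_measure_restrict_space[OF sigma_finite_lebesgue that] .

lemma meas_id_leb[measurable]: "(\<lambda>x::real. x) \<in> borel_measurable lebesgue"
  by (rule measurable_completion) simp

lemma meas_id_LI[measurable]: "(\<lambda>x::real. x) \<in> borel_measurable (lebesgue_on S)"
  by (rule measurable_restrict_space1) simp

lemma enn_sq_le: fixes x y :: ennreal assumes "x^2 \<le> y^2" shows "x \<le> y"
proof (cases x rule: ennreal_cases)
  case (real r)
  show ?thesis
  proof (cases y rule: ennreal_cases)
    case (real s)
    with \<open>x = ennreal r\<close> assms \<open>0 \<le> r\<close> have "ennreal (r^2) \<le> ennreal (s^2)"
      by (simp add: ennreal_power)
    then have "r^2 \<le> s^2" using \<open>0 \<le> s\<close> by (simp add: ennreal_le_iff)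
    then have "r \<le> s" using \<open>0 \<le> s\<close> by (rule power2_le_imp_le)
    then show ?thesis using \<open>x = ennreal r\<close> \<open>y = ennreal s\<close> by (simp add: ennreal_leI)
  qed simp
next
  case top
  then have "y^2 = top" using assms by (simp add: top_unique)
  then show ?thesis using top
    by (metis ennreal_mult_eq_top_iff power2_eq_square top_greatest)
qed
lemma meas_cnj[measurable (raw)]:
  "f \<in> borel_measurable M \<Longrightarrow> (\<lambda>x. cnj (f x :: complex)) \<in> borel_measurable M"
  by (rule borel_measurable_continuous_on[of cnj]) (auto intro: continuous_intros)

lemma cnj_swap: "cnj ((r::real) *\<^sub>R (x * cnj y)) = r *\<^sub>R (y * cnj (x::complex))"
  by (simp add: scaleR_conv_of_real mult_ac)

locale S5 =
  fixes a b :: ereal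
begin

abbreviation "I \<equiv> Ioo_e a b"
abbreviation "LI \<equiv> lebesgue_on I"

definition nq :: "(real \<Rightarrow> complex) \<Rightarrow> ennreal" where
  "nq f = (\<integral>\<^sup>+x. ennreal (cmod (f x))^2 \<partial>LI)"

lemma space_LI[simp]: "space LI = I" by simp

lemma L2_iff: "L2 a b f \<longleftrightarrow> f \<in> borel_measurable LI \<and> nq f < \<infinity>"
proof
  assume "L2 a b f"
  then show "f \<in> borel_measurable LI \<and> nq f < \<infinity>"
    unfolding L2_def integrable_iff_bounded nq_def by (simp add: ennreal_power)
next
  assume *: "f \<in> borel_measurable LI \<and> nq f < \<infinity>"
  then have [measurable]: "f \<in> borel_measurable LI" by simp
  show "L2 a b f"
    using * unfolding L2_def integrable_iff_bounded nq_def by (simp add: ennreal_power)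
qed

lemma L2norm_nonneg: "L2norm a b f \<ge> 0"
  unfolding L2norm_def by simp

lemma L2_nq: assumes "L2 a b f" shows "nq f = ennreal ((L2norm a b f)^2)"
proof -
  have int: "integrable LI (\<lambda>x. (cmod (f x))\<^sup>2)" using assms by (simp add: L2_def)
  have "(L2norm a b f)^2 = integral\<^sup>L LI (\<lambda>x. (cmod (f x))\<^sup>2)"
    unfolding L2norm_def by (simp add: integral_nonneg_AE)
  moreover have "nq f = ennreal (integral\<^sup>L LI (\<lambda>x. (cmod (f x))\<^sup>2))"
    unfolding nq_def using nn_integral_eq_integral[OF int] by (simp add: ennreal_power)
  ultimately show ?thesis by simp
qed

lemma L2_meas: "L2 a b f \<Longrightarrow> f \<in> borel_measurable LI" by (simp add: L2_def)

lemma nq_L2norm_le: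
  assumes "L2 a b f" "L2 a b g" "nq f \<le> ennreal (C^2) * nq g" "C \<ge> 0"
  shows "L2norm a b f \<le> C * L2norm a b g"
proof -
  have "ennreal ((L2norm a b f)^2) \<le> ennreal ((C * L2norm a b g)^2)"
    using assms by (simp add: L2_nq ennreal_mult' power_mult_distrib)
  then have "(L2norm a b f)^2 \<le> (C * L2norm a b g)^2"
    by (simp add: ennreal_le_iff)
  then show ?thesis using assms(4) L2norm_nonneg power2_le_imp_le by (metis mult_nonneg_nonneg)
qed

lemma CS:
  assumes f: "L2 a b f" and g: "L2 a b g"
  shows "integrable LI (\<lambda>x. f x * cnj (g x))"
    and "cmod (L2inner a b f g) \<le> L2norm a b f * L2norm a b g"
proof -
  have [measurable]: "f \<in> borel_measurable LI" "g \<in> borel_measurable LI" using f g by (auto simp: L2_def)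
  have "(\<integral>\<^sup>+x. ennreal (cmod (f x)) * ennreal (cmod (g x)) \<partial>LI)^2 \<le> nq f * nq g"
    unfolding nq_def by (rule Cauchy_Schwarz_nn_integral) auto
  also have "\<dots> = ennreal ((L2norm a b f * L2norm a b g)^2)"
    using f g by (simp add: L2_nq ennreal_mult' power_mult_distrib)
  also have "\<dots> = (ennreal (L2norm a b f * L2norm a b g))^2"
    by (rule ennreal_power[symmetric]) (simp add: L2norm_nonneg)
  finally have le0: "(\<integral>\<^sup>+x. ennreal (cmod (f x)) * ennreal (cmod (g x)) \<partial>LI) \<le> ennreal (L2norm a b f * L2norm a b g)"
    by (rule enn_sq_le)
  have "(\<integral>\<^sup>+x. ennreal (cmod (f x * cnj (g x))) \<partial>LI) = (\<integral>\<^sup>+x. ennreal (cmod (f x)) * ennreal (cmod (g x)) \<partial>LI)"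
    by (simp add: norm_mult ennreal_mult)
  with le0 have le: "(\<integral>\<^sup>+x. ennreal (cmod (f x * cnj (g x))) \<partial>LI) \<le> ennreal (L2norm a b f * L2norm a b g)"
    by simp
  show int: "integrable LI (\<lambda>x. f x * cnj (g x))"
  proof (subst integrable_iff_bounded, intro conjI)
    show "(\<lambda>x. f x * cnj (g x)) \<in> borel_measurable LI" by measurable
    show "(\<integral>\<^sup>+x. ennreal (norm (f x * cnj (g x))) \<partial>LI) < \<infinity>"
      using le by (metis ennreal_less_top infinity_ennreal_def order_le_less_trans)
  qed
  have "ennreal (cmod (L2inner a b f g)) \<le> (\<integral>\<^sup>+x. ennreal (cmod (f x * cnj (g x))) \<partial>LI)"
    unfolding L2inner_def by (rule integral_norm_bound_ennreal[OF int])
  also note le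
  finally show "cmod (L2inner a b f g) \<le> L2norm a b f * L2norm a b g"
    by (simp add: ennreal_le_iff L2norm_nonneg)
qed


lemma meas_ind_LI[measurable]: "S \<in> sets lebesgue \<Longrightarrow> (\<lambda>x. indicator S x :: real) \<in> borel_measurable LI"
  by (rule measurable_restrict_space1) simp

lemma L2_dom_nq:
  assumes g: "g \<in> borel_measurable LI" and f: "L2 a b f"
    and le: "\<And>x. x \<in> I \<Longrightarrow> cmod (g x) \<le> C * cmod (f x)"
  shows "nq g \<le> ennreal (C^2) * nq f"
proof -
  have "nq g \<le> (\<integral>\<^sup>+x. ennreal (C^2) * ennreal (cmod (f x))^2 \<partial>LI)"
    unfolding nq_def
  proof (rule nn_integral_mono)
    fix x assume "x \<in> space LI"
    then have x: "x \<in> I" by simp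
    have "0 \<le> cmod (g x)" by simp
    then have "(cmod (g x))^2 \<le> (C * cmod (f x))^2"
      using le[OF x] by (intro power_mono) simp_all
    then have "ennreal ((cmod (g x))^2) \<le> ennreal ((C^2) * (cmod (f x))^2)"
      by (simp add: power_mult_distrib ennreal_leI)
    then show "ennreal (cmod (g x))^2 \<le> ennreal (C^2) * ennreal (cmod (f x))^2"
      by (simp add: ennreal_power ennreal_mult)
  qed
  also have "\<dots> = ennreal (C^2) * nq f"
  proof -
    have [measurable]: "f \<in> borel_measurable LI" using f by (simp add: L2_def)
    show ?thesis unfolding nq_def by (intro nn_integral_cmult) measurable
  qed
  finally show ?thesis .
qed

lemma L2_dom:
  assumes g: "g \<in> borel_measurable LI" and f: "L2 a b f"
    and le: "\<And>x. x \<in> I \<Longrightarrow> cmod (g x) \<le> C * cmod (f x)"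
  shows "L2 a b g"
proof -
  have "nq g \<le> ennreal (C^2) * nq f" by (rule L2_dom_nq[OF g f le])
  also have "\<dots> < \<infinity>" using f by (simp add: L2_nq ennreal_mult_less_top)
  finally show ?thesis using g by (simp add: L2_iff)
qed

lemma L2_cmult: "L2 a b f \<Longrightarrow> L2 a b (\<lambda>x. c * f x)"
  by (rule L2_dom[where C="cmod c"]) (auto simp: L2_def norm_mult)

lemma L2_ind:
  assumes S[measurable]: "S \<in> sets lebesgue" and f: "L2 a b f"
  shows "L2 a b (\<lambda>x. of_real (indicator S x) * f x)"
proof (rule L2_dom[where C=1, OF _ f])
  have [measurable]: "f \<in> borel_measurable LI" using f by (simp add: L2_def)
  show "(\<lambda>x. complex_of_real (indicator S x) * f x) \<in> borel_measurable LI" by measurable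
qed (auto simp: norm_mult indicator_def)

lemma L2_add:
  assumes f: "L2 a b f" and g: "L2 a b g"
  shows "L2 a b (\<lambda>x. f x + g x)"
proof -
  have [measurable]: "f \<in> borel_measurable LI" "g \<in> borel_measurable LI" using f g by (auto simp: L2_def)
  have "nq (\<lambda>x. f x + g x) \<le> (\<integral>\<^sup>+x. 2 * ennreal (cmod (f x))^2 + 2 * ennreal (cmod (g x))^2 \<partial>LI)"
    unfolding nq_def
  proof (rule nn_integral_mono)
    fix x
    have "(cmod (f x + g x))^2 \<le> (cmod (f x) + cmod (g x))^2"
      by (simp add: norm_triangle_ineq power_mono)
    also have "\<dots> \<le> 2 * (cmod (f x))^2 + 2 * (cmod (g x))^2"
      by (simp add: power2_sum) (smt (verit) sum_squares_bound)
    finally have "ennreal ((cmod (f x + g x))^2) \<le> ennreal (2 * (cmod (f x))^2 + 2 * (cmod (g x))^2)"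
      by (rule ennreal_leI)
    then show "ennreal (cmod (f x + g x))^2 \<le> 2 * ennreal (cmod (f x))^2 + 2 * ennreal (cmod (g x))^2"
      by (simp add: ennreal_power ennreal_mult ennreal_plus)
  qed
  also have "\<dots> = 2 * nq f + 2 * nq g"
    unfolding nq_def by (simp add: nn_integral_add nn_integral_cmult)
  also have "\<dots> < \<infinity>" using f g by (simp add: L2_nq ennreal_mult_less_top)
  finally show ?thesis by (simp add: L2_iff)
qed

lemma L2_cong:
  assumes "\<And>x. x \<in> I \<Longrightarrow> f x = g x"
  shows "L2 a b f = L2 a b g" "L2norm a b f = L2norm a b g"
proof -
  have m: "f \<in> borel_measurable LI \<longleftrightarrow> g \<in> borel_measurable LI"
    by (rule measurable_cong) (simp add: assms)
  have i: "(\<integral>\<^sup>+x. ennreal (cmod (f x))^2 \<partial>LI) = (\<integral>\<^sup>+x. ennreal (cmod (g x))^2 \<partial>LI)"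
    by (rule nn_integral_cong) (simp add: assms)
  show "L2 a b f = L2 a b g" using m i by (simp add: L2_iff nq_def)
  have "integral\<^sup>L LI (\<lambda>x. (cmod (f x))\<^sup>2) = integral\<^sup>L LI (\<lambda>x. (cmod (g x))\<^sup>2)"
    by (rule Bochner_Integration.integral_cong) (simp_all add: assms)
  then show "L2norm a b f = L2norm a b g" by (simp add: L2norm_def)
qed

lemma L2inner_cong:
  assumes "\<And>x. x \<in> I \<Longrightarrow> f x = f' x" "\<And>x. x \<in> I \<Longrightarrow> g x = g' x"
  shows "L2inner a b f g = L2inner a b f' g'"
  unfolding L2inner_def by (rule Bochner_Integration.integral_cong) (simp_all add: assms)

lemma L2inner_cnj: "L2inner a b g f = cnj (L2inner a b f g)"
proof -
  have "cnj (integral\<^sup>L LI (\<lambda>x. f x * cnj (g x))) = integral\<^sup>L LI (\<lambda>x. cnj (f x * cnj (g x)))"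
    by (rule Bochner_Integration.integral_cnj[symmetric])
  then show ?thesis unfolding L2inner_def by (simp add: mult.commute)
qed

lemma L2inner_half_add:
  assumes "L2 a b u" "L2 a b v" "L2 a b g"
  shows "L2inner a b (\<lambda>x. (u x + v x) / 2) g = (L2inner a b u g + L2inner a b v g) / 2"
proof -
  have iu: "integrable LI (\<lambda>x. u x * cnj (g x))" and iv: "integrable LI (\<lambda>x. v x * cnj (g x))"
    using CS(1) assms by auto
  have "L2inner a b (\<lambda>x. (u x + v x) / 2) g = integral\<^sup>L LI (\<lambda>x. (u x * cnj (g x) + v x * cnj (g x)) / 2)"
    unfolding L2inner_def by (simp add: algebra_simps)
  also have "\<dots> = (integral\<^sup>L LI (\<lambda>x. u x * cnj (g x)) + integral\<^sup>L LI (\<lambda>x. v x * cnj (g x))) / 2"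
    using iu iv by simp
  finally show ?thesis by (simp add: L2inner_def)
qed

lemma L2inner_self:
  assumes "L2 a b f"
  shows "L2inner a b f f = of_real ((L2norm a b f)^2)"
proof -
  have "L2inner a b f f = integral\<^sup>L LI (\<lambda>x. complex_of_real ((cmod (f x))^2))"
    unfolding L2inner_def by (rule Bochner_Integration.integral_cong) (simp_all only: complex_norm_square)
  also have "\<dots> = of_real (integral\<^sup>L LI (\<lambda>x. (cmod (f x))^2))" by (rule integral_complex_of_real)
  also have "integral\<^sup>L LI (\<lambda>x. (cmod (f x))^2) = (L2norm a b f)^2"
    unfolding L2norm_def by (simp add: integral_nonneg_AE)
  finally show ?thesis .
qed


lemma nq_le_imp:
  assumes g: "g \<in> borel_measurable LI" and le: "nq g \<le> ennreal (B^2)" and B: "0 \<le> B"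
  shows "L2 a b g" "L2norm a b g \<le> B"
proof -
  have "nq g < \<infinity>" using le by (metis ennreal_less_top infinity_ennreal_def order_le_less_trans)
  then show L: "L2 a b g" using g by (simp add: L2_iff)
  have "ennreal ((L2norm a b g)^2) \<le> ennreal (B^2)" using le by (simp add: L2_nq[OF L])
  then have "(L2norm a b g)^2 \<le> B^2" by (simp add: ennreal_le_iff)
  then show "L2norm a b g \<le> B" using B by (rule power2_le_imp_le)
qed

end

locale S5p = S5 +
  fixes \<kappa> \<phi> :: "real \<Rightarrow> complex"
  assumes ab: "a < b"
    and \<kappa>_L2: "L2 a b \<kappa>"
    and \<phi>_meas: "\<phi> \<in> borel_measurable (lebesgue_on (Ioo_e a b))"
    and \<phi>_loc: "\<And>r. a < ereal r \<Longrightarrow> ereal r < b \<Longrightarrow>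
                 L2 a b (\<lambda>x. of_real (indicator (Ioo_e a (ereal r)) x) * \<phi> x)"
begin

lemma \<kappa>_meas[measurable]: "\<kappa> \<in> borel_measurable LI" using \<kappa>_L2 by (simp add: L2_def)
lemmas \<phi>_meas'[measurable] = \<phi>_meas

definition Gf :: "(real \<Rightarrow> complex) \<Rightarrow> real \<Rightarrow> complex" where
  "Gf f t = (\<integral>s. indicator {t<..} s *\<^sub>R (f s * cnj (\<kappa> s)) \<partial>LI)"

lemma I_sets[measurable]: "I \<in> sets lebesgue" by simp

lemma intop_eq:
  assumes t: "t \<in> I"
  shows "intop b \<phi> \<kappa> f t = \<phi> t * Gf f t"
proof -
  let ?k = "\<lambda>s. f s * cnj (\<kappa> s)"
  have "integral\<^sup>L (lebesgue_on (Ioo_e (ereal t) b)) ?k = (\<integral>s. indicator (Ioo_e (ereal t) b) s *\<^sub>R ?k s \<partial>lebesgue)"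
    by (rule integral_restrict_space) simp
  also have "\<dots> = (\<integral>s. indicator I s *\<^sub>R (indicator {t<..} s *\<^sub>R ?k s) \<partial>lebesgue)"
  proof (rule Bochner_Integration.integral_cong[OF refl])
    fix s
    have "indicator (Ioo_e (ereal t) b) s = (indicator I s * indicator {t<..} s :: real)"
      using t by (auto simp: Ioo_e_def indicator_def; metis less_ereal.simps(1) order.strict_trans)
    then show "indicator (Ioo_e (ereal t) b) s *\<^sub>R ?k s = indicator I s *\<^sub>R (indicator {t<..} s *\<^sub>R ?k s)"
      by simp
  qed
  also have "\<dots> = Gf f t"
    unfolding Gf_def by (rule integral_restrict_space[symmetric]) simp
  finally show ?thesis unfolding intop_def by simp
qed

lemma sf_LI: "sigma_finite_measure LI" by (rule sigma_finite_LI) simp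

lemma Gf_meas[measurable]:
  assumes [measurable]: "f \<in> borel_measurable LI"
  shows "Gf f \<in> borel_measurable LI"
proof -
  interpret sf: sigma_finite_measure LI by (rule sf_LI)
  have "(\<lambda>(t, s). indicator {t<..} s *\<^sub>R (f s * cnj (\<kappa> s))) \<in> borel_measurable (LI \<Otimes>\<^sub>M LI)"
  proof -
    have eq: "(\<lambda>(t, s). indicator {t<..} s *\<^sub>R (f s * cnj (\<kappa> s))) =
       (\<lambda>p. (if fst p < snd p then 1 else 0::real) *\<^sub>R (f (snd p) * cnj (\<kappa> (snd p))))"
      by (auto simp: fun_eq_iff indicator_def)
    show ?thesis unfolding eq by measurable
  qed
  then show ?thesis unfolding Gf_def[abs_def] by (rule sf.borel_measurable_lebesgue_integral)
qed


lemma k_int: "L2 a b f \<Longrightarrow> integrable LI (\<lambda>s. f s * cnj (\<kappa> s))"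
  using CS(1)[OF _ \<kappa>_L2] by blast

lemma Gf_integrand_int:
  assumes f: "L2 a b f"
  shows "integrable LI (\<lambda>s. indicator {t<..} s *\<^sub>R (f s * cnj (\<kappa> s)))"
proof (rule Bochner_Integration.integrable_bound[OF k_int[OF f]])
  have [measurable]: "f \<in> borel_measurable LI" using f by (simp add: L2_def)
  show "(\<lambda>s. indicator {t<..} s *\<^sub>R (f s * cnj (\<kappa> s))) \<in> borel_measurable LI" by measurable
  show "AE x in LI. norm (indicator {t<..} x *\<^sub>R (f x * cnj (\<kappa> x))) \<le> norm (f x * cnj (\<kappa> x))"
    by (auto simp: indicator_def)
qed

lemma Gf_bound:
  assumes f: "L2 a b f"
  shows "cmod (Gf f t) \<le> (\<integral>s. cmod (f s * cnj (\<kappa> s)) \<partial>LI)"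
proof -
  have "cmod (Gf f t) \<le> (\<integral>s. norm (indicator {t<..} s *\<^sub>R (f s * cnj (\<kappa> s))) \<partial>LI)"
    unfolding Gf_def by (rule integral_norm_bound)
  also have "\<dots> \<le> (\<integral>s. cmod (f s * cnj (\<kappa> s)) \<partial>LI)"
    by (rule integral_mono[OF integrable_norm[OF Gf_integrand_int[OF f]] integrable_norm[OF k_int[OF f]]])
       (auto simp: indicator_def)
  finally show ?thesis .
qed

lemma Gf_zero:
  assumes "\<And>s. s \<in> I \<Longrightarrow> t < s \<Longrightarrow> f s = 0"
  shows "Gf f t = 0"
proof -
  have "Gf f t = (\<integral>s. (0::complex) \<partial>LI)"
    unfolding Gf_def by (rule Bochner_Integration.integral_cong) (auto simp: assms indicator_def)
  then show ?thesis by simp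
qed

lemma TR:
  assumes f: "L2 a b f" and r: "a < ereal r" "ereal r < b"
    and van: "\<And>x. x \<in> I \<Longrightarrow> r \<le> x \<Longrightarrow> f x = 0"
  shows "L2 a b (intop b \<phi> \<kappa> f)" "\<And>t. t \<in> I \<Longrightarrow> r \<le> t \<Longrightarrow> intop b \<phi> \<kappa> f t = 0"
proof -
  have [measurable]: "f \<in> borel_measurable LI" using f by (simp add: L2_def)
  show z: "intop b \<phi> \<kappa> f t = 0" if "t \<in> I" "r \<le> t" for t
    using that van by (simp add: intop_eq Gf_zero)
  let ?A = "\<integral>s. cmod (f s * cnj (\<kappa> s)) \<partial>LI"
  have "L2 a b (\<lambda>t. \<phi> t * Gf f t)"
  proof (rule L2_dom[where C="?A", OF _ \<phi>_loc[OF r]])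
    show "(\<lambda>t. \<phi> t * Gf f t) \<in> borel_measurable LI" by measurable
    fix t assume t: "t \<in> I"
    show "cmod (\<phi> t * Gf f t) \<le> ?A * cmod (complex_of_real (indicator (Ioo_e a (ereal r)) t) * \<phi> t)"
    proof (cases "t < r")
      case True
      then have "indicator (Ioo_e a (ereal r)) t = (1::real)" using t by (auto simp: Ioo_e_def)
      then show ?thesis using Gf_bound[OF f, of t]
        by (simp add: norm_mult mult.commute mult_left_mono)
    next
      case False
      then have "Gf f t = 0" using van by (intro Gf_zero) auto
      then show ?thesis by (simp add: integral_nonneg_AE)
    qed
  qed
  then show "L2 a b (intop b \<phi> \<kappa> f)" by (subst L2_cong(1)[of _ "\<lambda>t. \<phi> t * Gf f t"]) (simp_all add: intop_eq)
qed

lemma TR_dom: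
  assumes f: "L2 a b f" and r: "a < ereal r" "ereal r < b"
    and van: "\<And>x. x \<in> I \<Longrightarrow> r \<le> x \<Longrightarrow> f x = 0"
  shows "f \<in> intop_dom a b \<phi> \<kappa>"
  using TR(1)[OF assms] f by (simp add: intop_dom_def)


lemma psf_LI: "pair_sigma_finite LI LI"
  unfolding pair_sigma_finite_def using sf_LI by simp

lemma param_meas_lt[measurable]:
  assumes [measurable]: "k \<in> borel_measurable LI"
  shows "(\<lambda>s. \<integral>t. indicator {..<s} t *\<^sub>R (k t :: complex) \<partial>LI) \<in> borel_measurable LI"
proof -
  interpret sf: sigma_finite_measure LI by (rule sf_LI)
  have "(\<lambda>(s, t). indicator {..<s} t *\<^sub>R k t) \<in> borel_measurable (LI \<Otimes>\<^sub>M LI)"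
  proof -
    have eq: "(\<lambda>(s, t). indicator {..<s} t *\<^sub>R k t) =
       (\<lambda>p. (if snd p < fst p then 1 else 0::real) *\<^sub>R k (snd p))"
      by (auto simp: fun_eq_iff indicator_def)
    show ?thesis unfolding eq by measurable
  qed
  then show ?thesis by (rule sf.borel_measurable_lebesgue_integral)
qed

lemma FUB:
  fixes U V :: "real \<Rightarrow> complex"
  assumes U: "integrable LI U" and V: "integrable LI V"
  shows "(\<integral>t. U t * (\<integral>s. indicator {t<..} s *\<^sub>R V s \<partial>LI) \<partial>LI) =
         (\<integral>s. V s * (\<integral>t. indicator {..<s} t *\<^sub>R U t \<partial>LI) \<partial>LI)"
proof -
  interpret p: pair_sigma_finite LI LI by (rule psf_LI)
  have [measurable]: "U \<in> borel_measurable LI" "V \<in> borel_measurable LI" using U V by auto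
  have iP: "integrable (LI \<Otimes>\<^sub>M LI) (\<lambda>(t, s). U t * V s)"
  proof (rule p.Fubini_integrable)
    show "(\<lambda>(t, s). U t * V s) \<in> borel_measurable (LI \<Otimes>\<^sub>M LI)" by measurable
    have "(\<lambda>t. \<integral>s. norm ((\<lambda>(t, s). U t * V s) (t, s)) \<partial>LI) = (\<lambda>t. norm (U t) * (\<integral>s. norm (V s) \<partial>LI))"
      by (simp add: norm_mult)
    moreover have "integrable LI (\<lambda>t. norm (U t) * (\<integral>s. norm (V s) \<partial>LI))"
      using U by (intro integrable_mult_left) auto
    ultimately show "integrable LI (\<lambda>t. \<integral>s. norm ((\<lambda>(t, s). U t * V s) (t, s)) \<partial>LI)" by simp
    show "AE t in LI. integrable LI (\<lambda>s. (\<lambda>(t, s). U t * V s) (t, s))"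
      using V by simp
  qed
  let ?A = "{p \<in> space (LI \<Otimes>\<^sub>M LI). fst p < snd p}"
  have A[measurable]: "?A \<in> sets (LI \<Otimes>\<^sub>M LI)" by measurable
  define F where "F t s = indicator ?A (t, s) *\<^sub>R (U t * V s)" for t s
  have iF: "integrable (LI \<Otimes>\<^sub>M LI) (\<lambda>(t, s). F t s)"
    unfolding F_def using integrable_mult_indicator[OF A iP] by (simp add: case_prod_beta')
  have "(\<integral>t. U t * (\<integral>s. indicator {t<..} s *\<^sub>R V s \<partial>LI) \<partial>LI) = (\<integral>t. (\<integral>s. F t s \<partial>LI) \<partial>LI)"
  proof (rule Bochner_Integration.integral_cong[OF refl])
    fix t assume t: "t \<in> space LI"
    have "(\<integral>s. F t s \<partial>LI) = (\<integral>s. U t * (indicator {t<..} s *\<^sub>R V s) \<partial>LI)"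
      by (rule Bochner_Integration.integral_cong[OF refl]) (use t in \<open>auto simp: F_def indicator_def space_pair_measure\<close>)
    also have "\<dots> = U t * (\<integral>s. indicator {t<..} s *\<^sub>R V s \<partial>LI)"
      by (rule integral_mult_right_zero)
    finally show "U t * (\<integral>s. indicator {t<..} s *\<^sub>R V s \<partial>LI) = (\<integral>s. F t s \<partial>LI)" by simp
  qed
  also have "\<dots> = integral\<^sup>L (LI \<Otimes>\<^sub>M LI) (\<lambda>(t, s). F t s)"
    by (rule p.integral_fst[OF iF])
  also have "\<dots> = (\<integral>s. (\<integral>t. F t s \<partial>LI) \<partial>LI)"
    by (rule p.integral_snd[OF iF, symmetric])
  also have "\<dots> = (\<integral>s. V s * (\<integral>t. indicator {..<s} t *\<^sub>R U t \<partial>LI) \<partial>LI)"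
  proof (rule Bochner_Integration.integral_cong[OF refl])
    fix s assume s: "s \<in> space LI"
    have "(\<integral>t. F t s \<partial>LI) = (\<integral>t. V s * (indicator {..<s} t *\<^sub>R U t) \<partial>LI)"
      by (rule Bochner_Integration.integral_cong[OF refl]) (use s in \<open>auto simp: F_def indicator_def space_pair_measure\<close>)
    also have "\<dots> = V s * (\<integral>t. indicator {..<s} t *\<^sub>R U t \<partial>LI)"
      by (rule integral_mult_right_zero)
    finally show "(\<integral>t. F t s \<partial>LI) = V s * (\<integral>t. indicator {..<s} t *\<^sub>R U t \<partial>LI)" .
  qed
  finally show ?thesis .
qed


definition hf :: "(real \<Rightarrow> complex) \<Rightarrow> real \<Rightarrow> complex" where
  "hf f s = \<kappa> s * (\<integral>t. indicator {..<s} t *\<^sub>R (f t * cnj (\<phi> t)) \<partial>LI)"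

lemma ADJ:
  assumes f: "L2 a b f" and r: "a < ereal r" "ereal r < b"
    and van: "\<And>x. x \<in> I \<Longrightarrow> r \<le> x \<Longrightarrow> f x = 0"
  shows "L2 a b (hf f)" "adjoint_pair a b (intop_dom a b \<phi> \<kappa>) (intop b \<phi> \<kappa>) f (hf f)"
proof -
  have [measurable]: "f \<in> borel_measurable LI" using f by (simp add: L2_def)
  let ?\<phi>r = "\<lambda>x. of_real (indicator (Ioo_e a (ereal r)) x) * \<phi> x"
  have i0: "integrable LI (\<lambda>t. f t * cnj (?\<phi>r t))" using CS(1)[OF f \<phi>_loc[OF r]] .
  have U0: "integrable LI (\<lambda>t. f t * cnj (\<phi> t))"
  proof (subst Bochner_Integration.integrable_cong[OF refl])
    show "f t * cnj (\<phi> t) = f t * cnj (?\<phi>r t)" if "t \<in> space LI" for t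
    proof (cases "t < r")
      case True
      then have "indicator (Ioo_e a (ereal r)) t = (1::real)" using that by (auto simp: Ioo_e_def)
      then show ?thesis by simp
    next
      case False
      then show ?thesis using van that by auto
    qed
  qed (rule i0)
  let ?W = "\<lambda>t. f t * cnj (\<phi> t)"
  have iU0: "integrable LI (\<lambda>t. indicator {..<s} t *\<^sub>R ?W t)" for s
  proof (rule Bochner_Integration.integrable_bound[OF U0])
    show "(\<lambda>t. indicator {..<s} t *\<^sub>R ?W t) \<in> borel_measurable LI" by measurable
    show "AE x in LI. norm (indicator {..<s} x *\<^sub>R ?W x) \<le> norm (?W x)"
      by (auto simp: indicator_def)
  qed
  have bnd: "cmod (\<integral>t. indicator {..<s} t *\<^sub>R ?W t \<partial>LI) \<le> (\<integral>t. cmod (?W t) \<partial>LI)" for s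
  proof -
    have "cmod (\<integral>t. indicator {..<s} t *\<^sub>R ?W t \<partial>LI) \<le> (\<integral>t. norm (indicator {..<s} t *\<^sub>R ?W t) \<partial>LI)"
      by (rule integral_norm_bound)
    also have "\<dots> \<le> (\<integral>t. cmod (?W t) \<partial>LI)"
      by (rule integral_mono[OF integrable_norm[OF iU0] integrable_norm[OF U0]]) (auto simp: indicator_def)
    finally show ?thesis .
  qed
  show L2h: "L2 a b (hf f)"
  proof (rule L2_dom[where C="\<integral>t. cmod (?W t) \<partial>LI", OF _ \<kappa>_L2])
    show "hf f \<in> borel_measurable LI" unfolding hf_def[abs_def] by measurable
    fix s
    show "cmod (hf f s) \<le> (\<integral>t. cmod (?W t) \<partial>LI) * cmod (\<kappa> s)"
    proof -
      have "cmod (hf f s) = cmod (\<kappa> s) * cmod (\<integral>t. indicator {..<s} t *\<^sub>R ?W t \<partial>LI)"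
        unfolding hf_def by (rule norm_mult)
      also have "\<dots> \<le> cmod (\<kappa> s) * (\<integral>t. cmod (?W t) \<partial>LI)"
        by (rule mult_left_mono[OF bnd norm_ge_zero])
      finally show ?thesis by (simp only: mult.commute)
    qed
  qed
  show "adjoint_pair a b (intop_dom a b \<phi> \<kappa>) (intop b \<phi> \<kappa>) f (hf f)"
    unfolding adjoint_pair_def
  proof (intro conjI ballI f L2h)
    fix g assume "g \<in> intop_dom a b \<phi> \<kappa>"
    then have g: "L2 a b g" by (simp add: intop_dom_def)
    let ?U = "\<lambda>t. \<phi> t * cnj (f t)"
    let ?V = "\<lambda>s. g s * cnj (\<kappa> s)"
    have iU: "integrable LI ?U"
      using integrable_cnj[OF U0] by (simp add: mult.commute)
    have iV: "integrable LI ?V" by (rule k_int[OF g])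
    have "L2inner a b (intop b \<phi> \<kappa> g) f = (\<integral>t. ?U t * (\<integral>s. indicator {t<..} s *\<^sub>R ?V s \<partial>LI) \<partial>LI)"
      unfolding L2inner_def
      by (rule Bochner_Integration.integral_cong[OF refl]) (simp add: intop_eq Gf_def mult_ac)
    also have "\<dots> = (\<integral>s. ?V s * (\<integral>t. indicator {..<s} t *\<^sub>R ?U t \<partial>LI) \<partial>LI)"
      by (rule FUB[OF iU iV])
    also have "\<dots> = L2inner a b g (hf f)"
      unfolding L2inner_def hf_def
    proof (rule Bochner_Integration.integral_cong[OF refl])
      fix s
      have "cnj (\<integral>t. indicator {..<s} t *\<^sub>R ?W t \<partial>LI) = (\<integral>t. cnj (indicator {..<s} t *\<^sub>R ?W t) \<partial>LI)"
        by (rule Bochner_Integration.integral_cnj[symmetric])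
      also have "\<dots> = (\<integral>t. indicator {..<s} t *\<^sub>R ?U t \<partial>LI)"
      proof (rule Bochner_Integration.integral_cong[OF refl])
        fix t
        show "cnj (indicator {..<s} t *\<^sub>R ?W t) = indicator {..<s} t *\<^sub>R ?U t"
          by (rule cnj_swap)
      qed
      finally show "?V s * (\<integral>t. indicator {..<s} t *\<^sub>R ?U t \<partial>LI) =
          g s * cnj (\<kappa> s * (\<integral>t. indicator {..<s} t *\<^sub>R ?W t \<partial>LI))"
        by (simp add: mult_ac)
    qed
    finally show "L2inner a b (intop b \<phi> \<kappa> g) f = L2inner a b g (hf f)" .
  qed
qed


end

context S5p begin
lemma enn2_le: "0 \<le> x \<Longrightarrow> 0 \<le> y \<Longrightarrow> 0 \<le> z \<Longrightarrow> 2 * x \<le> y + z \<Longrightarrow> 2 * ennreal x \<le> ennreal y + ennreal z"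
proof -
  assume *: "0 \<le> x" "0 \<le> y" "0 \<le> z" "2 * x \<le> y + z"
  have "ennreal (2 * x) \<le> ennreal (y + z)" using *(4) by (rule ennreal_leI)
  moreover have "ennreal (2 * x) = 2 * ennreal x" using *(1) by (simp add: ennreal_mult)
  moreover have "ennreal (y + z) = ennreal y + ennreal z" using *(2,3) by (rule ennreal_plus)
  ultimately show ?thesis by simp
qed

lemma enn2_le_rev: "0 \<le> x \<Longrightarrow> 0 \<le> y \<Longrightarrow> 0 \<le> z \<Longrightarrow> 2 * ennreal x \<le> ennreal y + ennreal z \<Longrightarrow> 2 * x \<le> y + z"
proof -
  assume *: "0 \<le> x" "0 \<le> y" "0 \<le> z" "2 * ennreal x \<le> ennreal y + ennreal z"
  moreover have "ennreal (2 * x) = 2 * ennreal x" using *(1) by (simp add: ennreal_mult)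
  moreover have "ennreal (y + z) = ennreal y + ennreal z" using *(2,3) by (rule ennreal_plus)
  ultimately have "ennreal (2 * x) \<le> ennreal (y + z)" by simp
  then show ?thesis using *(2,3) by (metis ennreal_le_iff add_nonneg_nonneg)
qed

lemma half_sum_bound:
  assumes u: "L2 a b u" and v: "L2 a b v" and C: "0 \<le> C"
    and bu: "L2norm a b u \<le> C" and bv: "L2norm a b v \<le> C"
  shows "L2norm a b (\<lambda>x. (u x + v x) / 2) \<le> C"
proof -
  have [measurable]: "u \<in> borel_measurable LI" "v \<in> borel_measurable LI" using u v by (auto simp: L2_def)
  let ?w = "\<lambda>x. (u x + v x) / 2"
  have w: "L2 a b ?w"
  proof (rule L2_dom[where C=1, OF _ L2_add[OF u v]])
    show "?w \<in> borel_measurable LI" by measurable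
  qed (simp add: norm_divide)
  have pw: "2 * ennreal (cmod (?w x))^2 \<le> ennreal (cmod (u x))^2 + ennreal (cmod (v x))^2" for x
  proof -
    define p where "p = cmod (u x)"
    define q where "q = cmod (v x)"
    have "cmod (?w x) \<le> (p + q) / 2"
      unfolding p_def q_def norm_divide by (simp add: divide_right_mono norm_triangle_ineq)
    then have "(cmod (?w x))^2 \<le> ((p + q) / 2)^2" by (intro power_mono) simp_all
    also have "((p + q) / 2)^2 = (p*p + 2*(p*q) + q*q) / 4" by (simp add: power2_eq_square field_simps)
    finally have A: "(cmod (?w x))^2 \<le> (p*p + 2*(p*q) + q*q) / 4" .
    have "0 \<le> (p - q) * (p - q)" by simp
    also have "(p - q) * (p - q) = p*p - 2*(p*q) + q*q" by (simp add: algebra_simps)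
    finally have B: "0 \<le> p*p - 2*(p*q) + q*q" .
    from A B have "2 * (cmod (?w x))^2 \<le> p^2 + q^2" unfolding power2_eq_square by argo
    then have "2 * ennreal ((cmod (?w x))^2) \<le> ennreal (p^2) + ennreal (q^2)"
      by (intro enn2_le) simp_all
    then show ?thesis unfolding p_def q_def by (simp add: ennreal_power)
  qed
  have "2 * nq ?w \<le> nq u + nq v"
  proof -
    have "2 * nq ?w = (\<integral>\<^sup>+x. 2 * ennreal (cmod (?w x))^2 \<partial>LI)"
      unfolding nq_def by (rule nn_integral_cmult[symmetric]) measurable
    also have "\<dots> \<le> (\<integral>\<^sup>+x. ennreal (cmod (u x))^2 + ennreal (cmod (v x))^2 \<partial>LI)"
      by (rule nn_integral_mono) (rule pw)
    also have "\<dots> = nq u + nq v"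
      unfolding nq_def by (rule nn_integral_add) measurable
    finally show ?thesis .
  qed
  then have "2 * ennreal ((L2norm a b ?w)^2) \<le> ennreal ((L2norm a b u)^2) + ennreal ((L2norm a b v)^2)"
    by (simp only: L2_nq[OF u] L2_nq[OF v] L2_nq[OF w])
  then have "2 * (L2norm a b ?w)^2 \<le> (L2norm a b u)^2 + (L2norm a b v)^2"
    by (rule enn2_le_rev[rotated 3]) simp_all
  moreover have "(L2norm a b u)^2 \<le> C^2" "(L2norm a b v)^2 \<le> C^2"
    using bu bv L2norm_nonneg by (auto intro: power_mono)
  ultimately have "(L2norm a b ?w)^2 \<le> C^2" by simp
  then show ?thesis using C by (rule power2_le_imp_le)
qed

lemma exists_approx:
  obtains X :: "nat \<Rightarrow> real" where "incseq X" "\<And>i. a < X i" "\<And>i. X i < b"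
    "\<And>x. x \<in> I \<Longrightarrow> \<exists>n. x < X n"
proof -
  obtain X :: "nat \<Rightarrow> real" where X: "incseq X" "\<And>i. a < X i" "\<And>i. X i < b" "(\<lambda>i. ereal (X i)) \<longlonglongrightarrow> b"
    using ereal_incseq_approx[OF ab] by blast
  have "\<exists>n. x < X n" if "x \<in> I" for x
  proof -
    have "ereal x < b" using that by (simp add: Ioo_e_def)
    then have "eventually (\<lambda>n. ereal x < ereal (X n)) sequentially"
      using order_tendstoD(1)[OF X(4)] by blast
    then obtain n where "ereal x < ereal (X n)" by (auto simp: eventually_sequentially)
    then show ?thesis by auto
  qed
  then show ?thesis using X that by blast
qed

lemma nq_sup:
  assumes h[measurable]: "h \<in> borel_measurable LI"
    and bnd: "\<And>r. a < ereal r \<Longrightarrow> ereal r < b \<Longrightarrow> nq (\<lambda>x. of_real (indicator (Ioo_e a (ereal r)) x) * h x) \<le> B"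
  shows "nq h \<le> B"
proof -
  obtain X :: "nat \<Rightarrow> real" where X: "incseq X" "\<And>i. a < X i" "\<And>i. X i < b" "\<And>x. x \<in> I \<Longrightarrow> \<exists>n. x < X n"
    using exists_approx by blast
  define F where "F n x = ennreal (cmod (of_real (indicator (Ioo_e a (ereal (X n))) x) * h x))^2" for n x
  have "nq h = (\<integral>\<^sup>+x. (SUP n. F n x) \<partial>LI)"
    unfolding nq_def
  proof (rule nn_integral_cong)
    fix x assume "x \<in> space LI"
    then have x: "x \<in> I" by simp
    then obtain n where n: "x < X n" using X(4) by blast
    then have "indicator (Ioo_e a (ereal (X n))) x = (1::real)" using x by (auto simp: Ioo_e_def)
    then have 1: "F n x = ennreal (cmod (h x))^2" by (simp add: F_def)
    have 2: "F m x \<le> ennreal (cmod (h x))^2" for m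
      unfolding F_def by (intro power_mono ennreal_leI) (auto simp: indicator_def)
    show "ennreal (cmod (h x))^2 = (SUP n. F n x)"
    proof (rule antisym)
      show "ennreal (cmod (h x))^2 \<le> (SUP n. F n x)" unfolding 1[symmetric] by (rule SUP_upper) simp
      show "(SUP n. F n x) \<le> ennreal (cmod (h x))^2" by (rule SUP_least) (rule 2)
    qed
  qed
  also have "\<dots> = (SUP n. \<integral>\<^sup>+x. F n x \<partial>LI)"
  proof (rule nn_integral_monotone_convergence_SUP)
    show "incseq F"
    proof (rule incseq_SucI, rule le_funI)
      fix n x
      have "X n \<le> X (Suc n)" using X(1) by (simp add: incseq_SucD)
      then have "indicator (Ioo_e a (ereal (X n))) x \<le> (indicator (Ioo_e a (ereal (X (Suc n)))) x :: real)"
        by (auto simp: indicator_def Ioo_e_def)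
      then have "cmod (of_real (indicator (Ioo_e a (ereal (X n))) x) * h x) \<le>
                 cmod (of_real (indicator (Ioo_e a (ereal (X (Suc n)))) x) * h x)"
        unfolding norm_mult by (intro mult_right_mono) auto
      then show "F n x \<le> F (Suc n) x"
        unfolding F_def by (intro power_mono ennreal_leI) auto
    qed
    show "\<And>i. F i \<in> borel_measurable LI" unfolding F_def by measurable
  qed
  also have "\<dots> \<le> B"
  proof (rule SUP_least)
    fix n
    show "(\<integral>\<^sup>+x. F n x \<partial>LI) \<le> B"
      using bnd[of "X n", unfolded nq_def] X(2)[of n] X(3)[of n] unfolding F_def by blast
  qed
  finally show ?thesis .
qed

lemma part1:
  assumes "op_bounded a b (intop_dom a b \<phi> \<kappa>) (intop b \<phi> \<kappa>)"
  shows "re_op_bounded a b (intop_dom a b \<phi> \<kappa>) (intop b \<phi> \<kappa>)"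
proof -
  let ?D = "intop_dom a b \<phi> \<kappa>" and ?T = "intop b \<phi> \<kappa>"
  obtain C0 where C0: "\<And>f. f \<in> ?D \<Longrightarrow> L2norm a b (?T f) \<le> C0 * L2norm a b f"
    using assms unfolding op_bounded_def by blast
  define C where "C = max C0 0"
  have C: "0 \<le> C" by (simp add: C_def)
  have Cb: "L2norm a b (?T g) \<le> C * L2norm a b g" if "g \<in> ?D" for g
  proof -
    have "C0 * L2norm a b g \<le> C * L2norm a b g"
      unfolding C_def by (intro mult_right_mono L2norm_nonneg) simp
    then show ?thesis using C0[OF that] by linarith
  qed
  show ?thesis unfolding re_op_bounded_def
  proof (intro exI[of _ C] allI impI)
    fix f h assume fh: "f \<in> ?D \<and> adjoint_pair a b ?D ?T f h"
    then have f: "L2 a b f" and Tf: "L2 a b (?T f)" and h: "L2 a b h"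
      and adj: "\<And>g. g \<in> ?D \<Longrightarrow> L2inner a b (?T g) f = L2inner a b g h"
      by (auto simp: intop_dom_def adjoint_pair_def)
    have [measurable]: "h \<in> borel_measurable LI" using h by (simp add: L2_def)
    have Cf: "0 \<le> C * L2norm a b f" using C L2norm_nonneg by simp
    have "nq h \<le> ennreal ((C * L2norm a b f)^2)"
    proof (rule nq_sup)
      fix r assume r: "a < ereal r" "ereal r < b"
      define g where "g x = of_real (indicator (Ioo_e a (ereal r)) x) * h x" for x
      have gL2: "L2 a b g" unfolding g_def by (rule L2_ind[OF _ h]) simp
      have gD: "g \<in> ?D" by (rule TR_dom[OF gL2 r]) (simp add: g_def indicator_def Ioo_e_def)
      have "L2inner a b g h = L2inner a b g g"
        unfolding L2inner_def
        by (rule Bochner_Integration.integral_cong[OF refl]) (simp add: g_def indicator_def)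
      then have eq: "L2inner a b (?T g) f = of_real ((L2norm a b g)^2)"
        using adj[OF gD] L2inner_self[OF gL2] by simp
      have TgL2: "L2 a b (?T g)" using gD by (simp add: intop_dom_def)
      have "(L2norm a b g)^2 \<le> L2norm a b (?T g) * L2norm a b f"
        using CS(2)[OF TgL2 f] unfolding eq norm_of_real by simp
      also have "\<dots> \<le> C * L2norm a b g * L2norm a b f"
        by (intro mult_right_mono Cb gD L2norm_nonneg)
      finally have le: "L2norm a b g * L2norm a b g \<le> (C * L2norm a b f) * L2norm a b g"
        by (simp add: power2_eq_square mult_ac)
      have "L2norm a b g \<le> C * L2norm a b f"
      proof (cases "L2norm a b g = 0")
        case True then show ?thesis using Cf by simp
      next
        case False
        then have "0 < L2norm a b g" using L2norm_nonneg[of g] by linarith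
        then show ?thesis using le by simp
      qed
      then have "(L2norm a b g)^2 \<le> (C * L2norm a b f)^2"
        by (intro power_mono L2norm_nonneg)
      then show "nq g \<le> ennreal ((C * L2norm a b f)^2)"
        unfolding L2_nq[OF gL2] by (rule ennreal_leI)
    qed simp
    then have hb: "L2norm a b h \<le> C * L2norm a b f"
      by (rule nq_le_imp(2)[rotated]) (simp_all add: Cf)
    show "L2norm a b (\<lambda>x. (?T f x + h x) / 2) \<le> C * L2norm a b f"
      by (rule half_sum_bound[OF Tf h Cf Cb hb]) (use fh in simp)
  qed
qed

end

lemma mult_cnj_sq: "z * cnj z = (complex_of_real (cmod z))^2"
  by (metis complex_norm_square of_real_power)

context S5 begin
lemma AE_LI_neq: "AE x in LI. x \<noteq> t"
proof (subst AE_restrict_space_iff)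
  show "AE x in lebesgue. x \<in> I \<longrightarrow> x \<noteq> t"
    using AE_completion[OF AE_lborel_singleton[of t]] by eventually_elim simp
qed simp
end

locale S5c = S5p +
  fixes c :: "nat \<Rightarrow> ereal"
  assumes c0: "c 0 = a"
    and c_mono: "\<And>n. c n < c (Suc n)"
    and c_lt: "\<And>n. c n < b"
    and c_norm: "\<And>n. (L2norm a b (\<lambda>x. of_real (indicator (Ioo_e (c n) b) x) * \<kappa> x))\<^sup>2
                       = (1/2) ^ n * (L2norm a b \<kappa>)\<^sup>2"
begin

abbreviation "K2 \<equiv> (L2norm a b \<kappa>)\<^sup>2"
abbreviation "J n \<equiv> Ioo_e (c (n - 1)) (c n)"

lemma c_smono: "m < n \<Longrightarrow> c m < c n"
  using lift_Suc_mono_less[of c, OF c_mono] by blast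

lemma c_le: "m \<le> n \<Longrightarrow> c m \<le> c n"
  using c_smono by (cases "m = n") (auto simp: le_less)

lemma c_gt_a: "0 < n \<Longrightarrow> a < c n"
  using c_smono[of 0 n] c0 by simp

definition cr :: "nat \<Rightarrow> real" where "cr n = real_of_ereal (c n)"

lemma c_real: "0 < n \<Longrightarrow> c n = ereal (cr n)"
proof -
  assume n: "0 < n"
  have "c n \<noteq> -\<infinity>" using c_gt_a[OF n] by auto
  moreover have "c n \<noteq> \<infinity>" using c_lt[of n] by auto
  ultimately show ?thesis unfolding cr_def by (cases "c n") auto
qed

lemma cr_in: "0 < n \<Longrightarrow> a < ereal (cr n) \<and> ereal (cr n) < b"
  using c_real c_gt_a c_lt by metis

definition mass :: "real set \<Rightarrow> ennreal" where
  "mass S = nq (\<lambda>x. of_real (indicator S x) * \<kappa> x)"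

lemma L2_ind_\<kappa>: "L2 a b (\<lambda>x. of_real (indicator (Ioo_e x0 y0) x) * \<kappa> x)"
  by (rule L2_ind[OF _ \<kappa>_L2]) simp

lemma mass_eq: "mass (Ioo_e x0 y0) = ennreal ((L2norm a b (\<lambda>x. of_real (indicator (Ioo_e x0 y0) x) * \<kappa> x))^2)"
  unfolding mass_def by (rule L2_nq[OF L2_ind_\<kappa>])

lemma mass_split:
  assumes n: "0 < n"
  shows "mass (Ioo_e (c (n - 1)) b) = mass (J n) + mass (Ioo_e (c n) b)"
proof -
  have [measurable]: "\<kappa> \<in> borel_measurable LI" by simp
  have "mass (Ioo_e (c (n - 1)) b) =
      (\<integral>\<^sup>+x. ennreal (cmod (of_real (indicator (J n) x) * \<kappa> x))^2 +
              ennreal (cmod (of_real (indicator (Ioo_e (c n) b) x) * \<kappa> x))^2 \<partial>LI)"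
    unfolding mass_def nq_def
  proof (rule nn_integral_cong_AE)
    show "AE x in LI. ennreal (cmod (of_real (indicator (Ioo_e (c (n - 1)) b) x) * \<kappa> x))^2 =
      ennreal (cmod (of_real (indicator (J n) x) * \<kappa> x))^2 +
              ennreal (cmod (of_real (indicator (Ioo_e (c n) b) x) * \<kappa> x))^2"
      using AE_LI_neq[of "cr n"]
    proof eventually_elim
      case (elim x)
      have cn: "c n = ereal (cr n)" by (rule c_real[OF n])
      have lt: "c (n - 1) < c n" using c_smono[of "n - 1" n] n by simp
      have cb: "ereal (cr n) < b" using c_lt[of n] cn by simp
      have lt': "c (n - 1) < ereal (cr n)" using lt cn by simp
      have "(x \<in> Ioo_e (c (n - 1)) b) = (x \<in> J n \<or> x \<in> Ioo_e (c n) b) \<and> \<not> (x \<in> J n \<and> x \<in> Ioo_e (c n) b)"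
      proof (cases "x < cr n")
        case True
        then have "ereal x < ereal (cr n)" by simp
        then have "ereal x < b" using cb by (rule order.strict_trans)
        then show ?thesis unfolding Ioo_e_def cn using True by auto
      next
        case False
        then have "cr n < x" using elim by simp
        then have "ereal (cr n) < ereal x" by simp
        then have "c (n - 1) < ereal x" using lt' by (metis order.strict_trans)
        then show ?thesis unfolding Ioo_e_def cn using False \<open>cr n < x\<close> by auto
      qed
      then show ?case by (auto simp: indicator_def)
    qed
  qed
  also have "\<dots> = mass (J n) + mass (Ioo_e (c n) b)"
    unfolding mass_def nq_def by (rule nn_integral_add) measurable
  finally show ?thesis .
qed

lemma kJ:
  assumes n: "0 < n"
  shows "(L2norm a b (\<lambda>x. of_real (indicator (J n) x) * \<kappa> x))^2 = (1/2)^n * K2"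
proof -
  let ?k = "(L2norm a b (\<lambda>x. of_real (indicator (J n) x) * \<kappa> x))^2"
  have "ennreal ((1/2)^(n-1) * K2) = ennreal ?k + ennreal ((1/2)^n * K2)"
    using mass_split[OF n] unfolding mass_eq c_norm by simp
  also have "\<dots> = ennreal (?k + (1/2)^n * K2)" by (rule ennreal_plus[symmetric]) simp_all
  finally have "(1/2)^(n-1) * K2 = ?k + (1/2)^n * K2"
    by (subst (asm) ennreal_inj) simp_all
  moreover have "(1/2::real)^(n-1) = 2 * (1/2)^n"
  proof -
    obtain m where m: "n = Suc m" using n by (cases n) auto
    show ?thesis unfolding m by simp
  qed
  ultimately show ?thesis by (simp add: algebra_simps)
qed

lemma L2norm_sq: "(L2norm a b f)^2 = (\<integral>x. (cmod (f x))^2 \<partial>LI)"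
  unfolding L2norm_def by (simp add: integral_nonneg_AE)

lemma Gf_const:
  assumes t: "\<And>s. s \<in> S \<Longrightarrow> t < s"
  shows "Gf (\<lambda>x. of_real (indicator S x) * \<kappa> x) t = of_real ((L2norm a b (\<lambda>x. of_real (indicator S x) * \<kappa> x))^2)"
proof -
  have "Gf (\<lambda>x. of_real (indicator S x) * \<kappa> x) t = (\<integral>s. complex_of_real ((cmod (of_real (indicator S s) * \<kappa> s))^2) \<partial>LI)"
    unfolding Gf_def
  proof (rule Bochner_Integration.integral_cong[OF refl])
    fix s
    show "indicator {t<..} s *\<^sub>R (of_real (indicator S s) * \<kappa> s * cnj (\<kappa> s)) =
        complex_of_real ((cmod (of_real (indicator S s) * \<kappa> s))^2)"
    proof (cases "s \<in> S")
      case True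
      then have "t < s" by (rule t)
      then show ?thesis using True by (simp add: indicator_def) (metis complex_norm_square of_real_power)
    qed (simp add: indicator_def)
  qed
  also have "\<dots> = of_real (\<integral>s. (cmod (of_real (indicator S s) * \<kappa> s))^2 \<partial>LI)"
    by (rule integral_complex_of_real)
  finally show ?thesis by (simp only: L2norm_sq)
qed

lemma part2:
  assumes "re_op_bounded a b (intop_dom a b \<phi> \<kappa>) (intop b \<phi> \<kappa>)"
  shows "\<exists>M. \<forall>n\<ge>1. L2norm a b (\<lambda>x. of_real (indicator (J n) x) * \<kappa> x)
                     * L2norm a b (\<lambda>x. of_real (indicator (J n) x) * \<phi> x) \<le> M"
proof -
  let ?D = "intop_dom a b \<phi> \<kappa>" and ?T = "intop b \<phi> \<kappa>"
  obtain C0 where C0: "\<And>f h. f \<in> ?D \<Longrightarrow> adjoint_pair a b ?D ?T f h \<Longrightarrow>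
       L2norm a b (\<lambda>x. (?T f x + h x) / 2) \<le> C0 * L2norm a b f"
    using assms unfolding re_op_bounded_def by blast
  show ?thesis
  proof (intro exI[of _ "4 * \<bar>C0\<bar>"] allI impI)
    fix n :: nat assume "1 \<le> n"
    then have n: "0 < n" by simp
    have n1: "0 < Suc n" by simp
    define f where "f x = of_real (indicator (J (Suc n)) x) * \<kappa> x" for x
    define g where "g x = of_real (indicator (J n) x) * \<phi> x" for x
    define F where "F = L2norm a b f"
    define P where "P = L2norm a b g"
    define kn where "kn = L2norm a b (\<lambda>x. of_real (indicator (J n) x) * \<kappa> x)"
    have F0: "0 \<le> F" and P0: "0 \<le> P" and kn0: "0 \<le> kn" by (simp_all add: F_def P_def kn_def L2norm_nonneg)
    have rn: "a < ereal (cr n)" "ereal (cr n) < b" using cr_in[OF n] by auto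
    have rn1: "a < ereal (cr (Suc n))" "ereal (cr (Suc n)) < b" using cr_in[OF n1] by auto
    have cn: "c n = ereal (cr n)" by (rule c_real[OF n])
    have cn1: "c (Suc n) = ereal (cr (Suc n))" by (rule c_real[OF n1])
    have fL2: "L2 a b f" unfolding f_def by (rule L2_ind_\<kappa>)
    have fvan: "f x = 0" if "cr (Suc n) \<le> x" for x
      using that unfolding f_def cn1 by (simp add: indicator_def Ioo_e_def)
    have fD: "f \<in> ?D" by (rule TR_dom[OF fL2 rn1]) (simp add: fvan)
    have adj: "adjoint_pair a b ?D ?T f (hf f)" by (rule ADJ(2)[OF fL2 rn1]) (simp add: fvan)
    have hL2: "L2 a b (hf f)" by (rule ADJ(1)[OF fL2 rn1]) (simp add: fvan)
    have TfL2: "L2 a b (?T f)" using fD by (simp add: intop_dom_def)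
    have gsub: "x \<in> J n \<Longrightarrow> x \<in> Ioo_e a (ereal (cr n))" for x
      using c_le[of 0 "n - 1"] c0 unfolding cn Ioo_e_def by (auto intro: order.strict_trans1)
    have geq: "g x = of_real (indicator (J n) x) * (of_real (indicator (Ioo_e a (ereal (cr n))) x) * \<phi> x)" for x
      unfolding g_def using gsub[of x] by (simp add: indicator_def)
    have gL2: "L2 a b g" unfolding geq by (rule L2_ind[OF _ \<phi>_loc[OF rn]]) simp
    have gvan: "g x = 0" if "cr n \<le> x" for x
      using that unfolding g_def cn by (simp add: indicator_def Ioo_e_def)
    have gD: "g \<in> ?D" by (rule TR_dom[OF gL2 rn]) (simp add: gvan)
    have Tgvan: "?T g t = 0" if "t \<in> I" "cr n \<le> t" for t
      by (rule TR(2)[OF gL2 rn _ that]) (simp add: gvan)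
    have TgL2: "L2 a b (?T g)" using gD by (simp add: intop_dom_def)
    have "L2inner a b (?T g) f = 0"
    proof -
      have "L2inner a b (?T g) f = (\<integral>t. 0 \<partial>LI)"
        unfolding L2inner_def
      proof (rule Bochner_Integration.integral_cong[OF refl])
        fix t assume t: "t \<in> space LI"
        show "?T g t * cnj (f t) = 0"
        proof (cases "t \<in> J (Suc n)")
          case True
          then have "cr n \<le> t" using cn by (simp add: Ioo_e_def)
          then show ?thesis using Tgvan t by simp
        qed (simp add: f_def)
      qed
      then show ?thesis by simp
    qed
    then have "L2inner a b g (hf f) = 0" using adj gD unfolding adjoint_pair_def by simp
    then have ihg: "L2inner a b (hf f) g = 0" by (simp add: L2inner_cnj[of _ "hf f"])
    have iTfg: "L2inner a b (?T f) g = of_real (F^2 * P^2)"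
    proof -
      have "L2inner a b (?T f) g = (\<integral>t. of_real (F^2 * (cmod (g t))^2) \<partial>LI)"
        unfolding L2inner_def
      proof (rule Bochner_Integration.integral_cong[OF refl])
        fix t assume t: "t \<in> space LI"
        show "?T f t * cnj (g t) = of_real (F^2 * (cmod (g t))^2)"
        proof (cases "t \<in> J n")
          case True
          have "t < s" if "s \<in> J (Suc n)" for s
          proof -
            have "ereal t < c n" "c n < ereal s" using True that by (simp_all add: Ioo_e_def)
            then have "ereal t < ereal s" by (rule order.strict_trans)
            then show ?thesis by simp
          qed
          then have "Gf f t = of_real (F^2)" unfolding f_def F_def by (rule Gf_const)
          then show ?thesis using t True
            by (simp add: intop_eq g_def indicator_def mult_cnj_sq mult_ac)
        qed (simp add: g_def)
      qed
      also have "\<dots> = of_real (\<integral>t. F^2 * (cmod (g t))^2 \<partial>LI)"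
        by (rule integral_complex_of_real)
      also have "(\<integral>t. F^2 * (cmod (g t))^2 \<partial>LI) = F^2 * P^2"
        unfolding P_def L2norm_sq by simp
      finally show ?thesis .
    qed
    have "L2inner a b (\<lambda>x. (?T f x + hf f x) / 2) g = of_real (F^2 * P^2 / 2)"
      unfolding L2inner_half_add[OF TfL2 hL2 gL2] iTfg ihg by simp
    note ie = this
    have wL2: "L2 a b (\<lambda>x. (?T f x + hf f x) / 2)"
    proof (rule L2_dom[where C=1, OF _ L2_add[OF TfL2 hL2]])
      have [measurable]: "?T f \<in> borel_measurable LI" "hf f \<in> borel_measurable LI"
        using TfL2 hL2 by (auto simp: L2_def)
      show "(\<lambda>x. (?T f x + hf f x) / 2) \<in> borel_measurable LI" by measurable
    qed (simp add: norm_divide)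
    have "cmod (of_real (F^2 * P^2 / 2)) = F^2 * P^2 / 2" by (simp only: norm_of_real) simp
    then have "F^2 * P^2 / 2 \<le> L2norm a b (\<lambda>x. (?T f x + hf f x) / 2) * P"
      using CS(2)[OF wL2 gL2] unfolding ie P_def by simp
    also have "\<dots> \<le> C0 * F * P"
      using C0[OF fD adj] P0 unfolding F_def by (simp add: mult_right_mono)
    also have "\<dots> \<le> \<bar>C0\<bar> * (F * P)"
      using F0 P0 by (simp add: mult_right_mono mult.assoc)
    finally have key: "(F * P)^2 \<le> 2 * \<bar>C0\<bar> * (F * P)" by (simp add: power2_eq_square field_simps)
    have FP: "F * P \<le> 2 * \<bar>C0\<bar>"
    proof (cases "F * P = 0")
      case False
      then have "0 < F * P" using F0 P0 by (simp add: less_le)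
      then show ?thesis using key unfolding power2_eq_square by (metis mult_le_cancel_right_pos)
    next
      case True show ?thesis by (subst True) simp
    qed
    have "kn^2 = 2 * F^2"
      unfolding kn_def F_def f_def kJ[OF n] kJ[OF n1] by simp
    then have "(kn * P)^2 = 2 * (F * P)^2" by (simp add: power_mult_distrib)
    also have "\<dots> \<le> 2 * (2 * \<bar>C0\<bar>)^2"
      using FP F0 P0 by (intro mult_left_mono power_mono) simp_all
    also have "\<dots> \<le> (4 * \<bar>C0\<bar>)^2" by (simp add: power2_eq_square)
    finally have "(kn * P)^2 \<le> (4 * \<bar>C0\<bar>)^2" .
    then have "kn * P \<le> 4 * \<bar>C0\<bar>" by (rule power2_le_imp_le) simp
    then show "L2norm a b (\<lambda>x. of_real (indicator (J n) x) * \<kappa> x)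
                     * L2norm a b (\<lambda>x. of_real (indicator (J n) x) * \<phi> x) \<le> 4 * \<bar>C0\<bar>"
      unfolding kn_def P_def g_def .
  qed
qed

end

lemma enn_ind_sq: "ennreal (cmod (of_real (indicator S x) * z))^2 = indicator S x * ennreal (cmod z)^2"
  by (auto simp: indicator_def)

context S5 begin

lemma CS_nn:
  assumes f: "L2 a b f" and g: "L2 a b g"
  shows "(\<integral>\<^sup>+x. ennreal (cmod (f x)) * ennreal (cmod (g x)) \<partial>LI) \<le> ennreal (L2norm a b f * L2norm a b g)"
proof -
  have [measurable]: "f \<in> borel_measurable LI" "g \<in> borel_measurable LI" using f g by (auto simp: L2_def)
  have "(\<integral>\<^sup>+x. ennreal (cmod (f x)) * ennreal (cmod (g x)) \<partial>LI)^2 \<le> nq f * nq g"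
    unfolding nq_def by (rule Cauchy_Schwarz_nn_integral) auto
  also have "\<dots> = ennreal ((L2norm a b f * L2norm a b g)^2)"
    using f g by (simp add: L2_nq ennreal_mult' power_mult_distrib)
  also have "\<dots> = (ennreal (L2norm a b f * L2norm a b g))^2"
    by (rule ennreal_power[symmetric]) (simp add: L2norm_nonneg)
  finally show ?thesis by (rule enn_sq_le)
qed

lemma nq_ind: "nq (\<lambda>x. of_real (indicator S x) * f x) = (\<integral>\<^sup>+x. indicator S x * ennreal (cmod (f x))^2 \<partial>LI)"
  unfolding nq_def by (simp only: enn_ind_sq)

end

context S5c begin

definition "U = (\<Union>m. J m)"

lemma Ioo_e_empty[simp]: "Ioo_e x x = {}" unfolding Ioo_e_def using less_asym by blast

lemma J0: "J 0 = {}" by simp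

lemma J_disj: "disjoint_family J"
unfolding disjoint_family_on_def
proof (intro ballI impI)
  fix m m' :: nat assume "m \<noteq> m'"
  then have "m < m' \<or> m' < m" by arith
  moreover have "J m \<inter> J m' = {}" if "m < m'" for m m'
  proof -
    have "c m \<le> c (m' - 1)" using that by (intro c_le) simp
    then show ?thesis by (auto simp: Ioo_e_def)
  qed
  ultimately show "J m \<inter> J m' = {}" by (metis inf_commute)
qed

lemma U_sets[measurable]: "U \<in> sets lebesgue" unfolding U_def by measurable

lemma nU_sets[measurable]: "- U \<in> sets lebesgue"
  using sets.compl_sets[OF U_sets] by (simp add: Compl_eq_Diff_UNIV)

lemma meas_id_LI_leb: "(\<lambda>x. x) \<in> LI \<rightarrow>\<^sub>M lebesgue"
  by (rule measurable_restrict_space1) simp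

lemma meas_ind_LI_enn[measurable]: "S \<in> sets lebesgue \<Longrightarrow> (\<lambda>x. indicator S x :: ennreal) \<in> borel_measurable LI"
  by (rule measurable_restrict_space1) simp

lemma sum_ind_J: "(\<Sum>m. indicator (J m) x :: ennreal) = indicator U x"
  unfolding U_def by (rule suminf_indicator[OF J_disj])

lemma mass_ind: "mass S = (\<integral>\<^sup>+x. indicator S x * ennreal (cmod (\<kappa> x))^2 \<partial>LI)"
  unfolding mass_def by (rule nq_ind)

lemma mass_J: "mass (J m) = ennreal (if m = 0 then 0 else (1/2)^m * K2)"
proof (cases "m = 0")
  case True then show ?thesis by (simp add: J0 mass_def nq_def)
next
  case False
  then show ?thesis using kJ[of m] mass_eq[of "c (m - 1)" "c m"] by simp
qed

lemma sum_mass_J: "(\<Sum>m. mass (J m)) = ennreal K2"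
proof -
  have "(\<lambda>m. (if m = 0 then 0 else (1/2::real)^m * K2)) sums K2"
  proof -
    have "(\<lambda>n. (1/2::real)^n) sums (1 / (1 - 1/2))" by (rule geometric_sums) simp
    from sums_mult2[OF this, of "K2/2"] have "(\<lambda>n. (1/2::real)^n * (K2/2)) sums K2" by simp
    then have "(\<lambda>n. if Suc n = 0 then 0 else (1/2::real)^(Suc n) * K2) sums K2"
      by (simp add: mult_ac)
    then have "(\<lambda>m. (if m = 0 then 0 else (1/2::real)^m * K2)) sums (K2 + (if (0::nat) = 0 then 0 else (1/2)^0 * K2))"
      using sums_Suc_iff[of "\<lambda>m. if m = 0 then 0 else (1/2::real)^m * K2" K2] by simp
    then show ?thesis by simp
  qed
  then show ?thesis unfolding mass_J by (rule suminf_ennreal_eq[rotated]) simp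
qed

lemma \<kappa>_offU: "AE s in LI. s \<notin> U \<longrightarrow> \<kappa> s = 0"
proof -
  have [measurable]: "\<kappa> \<in> borel_measurable LI" by simp
  have [measurable]: "(\<lambda>x. indicator U x :: ennreal) \<in> borel_measurable LI" by (rule meas_ind_LI_enn) simp
  have [measurable]: "(\<lambda>x. indicator (- U) x :: ennreal) \<in> borel_measurable LI" by (rule meas_ind_LI_enn) simp
  have "nq \<kappa> = (\<integral>\<^sup>+x. indicator U x * ennreal (cmod (\<kappa> x))^2 + indicator (- U) x * ennreal (cmod (\<kappa> x))^2 \<partial>LI)"
    unfolding nq_def by (rule nn_integral_cong) (simp split: split_indicator)
  also have "\<dots> = (\<integral>\<^sup>+x. indicator U x * ennreal (cmod (\<kappa> x))^2 \<partial>LI) + (\<integral>\<^sup>+x. indicator (- U) x * ennreal (cmod (\<kappa> x))^2 \<partial>LI)"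
  proof (rule nn_integral_add)
    show "(\<lambda>x. indicator U x * ennreal (cmod (\<kappa> x))^2) \<in> borel_measurable LI" by measurable
    show "(\<lambda>x. indicator (- U) x * ennreal (cmod (\<kappa> x))^2) \<in> borel_measurable LI" by measurable
  qed
  also have "(\<integral>\<^sup>+x. indicator U x * ennreal (cmod (\<kappa> x))^2 \<partial>LI) = (\<Sum>m. mass (J m))"
  proof -
    have "(\<integral>\<^sup>+x. indicator U x * ennreal (cmod (\<kappa> x))^2 \<partial>LI) =
        (\<integral>\<^sup>+x. (\<Sum>i. indicator (J i) x * ennreal (cmod (\<kappa> x))^2) \<partial>LI)"
      by (rule nn_integral_cong) (simp add: sum_ind_J[symmetric] ennreal_suminf_multc)
    also have "\<dots> = (\<Sum>i. \<integral>\<^sup>+x. indicator (J i) x * ennreal (cmod (\<kappa> x))^2 \<partial>LI)"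
    proof (rule nn_integral_suminf)
      fix i
      have [measurable]: "(\<lambda>x. indicator (J i) x :: ennreal) \<in> borel_measurable LI" by (rule meas_ind_LI_enn) simp
      show "(\<lambda>x. indicator (J i) x * ennreal (cmod (\<kappa> x))^2) \<in> borel_measurable LI" by measurable
    qed
    finally show ?thesis by (simp add: mass_ind)
  qed
  finally have "ennreal K2 = ennreal K2 + (\<integral>\<^sup>+x. indicator (- U) x * ennreal (cmod (\<kappa> x))^2 \<partial>LI)"
    unfolding sum_mass_J L2_nq[OF \<kappa>_L2] .
  then have "(\<integral>\<^sup>+x. indicator (- U) x * ennreal (cmod (\<kappa> x))^2 \<partial>LI) = 0"
    using ennreal_add_left_cancel[of "ennreal K2" 0] by simp
  then have "AE x in LI. indicator (- U) x * ennreal (cmod (\<kappa> x))^2 = 0"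
  proof -
    have m: "(\<lambda>x. indicator (- U) x * ennreal (cmod (\<kappa> x))^2) \<in> borel_measurable LI" by measurable
    show ?thesis using nn_integral_0_iff_AE[OF m] \<open>(\<integral>\<^sup>+x. indicator (- U) x * ennreal (cmod (\<kappa> x))^2 \<partial>LI) = 0\<close> by simp
  qed
  then show ?thesis by eventually_elim (auto simp: indicator_def)
qed

end

context S5c begin

lemma AE_not_cr: "AE t in LI. \<forall>m. t \<noteq> cr m"
  by (subst AE_all_countable) (intro allI AE_LI_neq)

lemma notU:
  assumes t: "t \<in> I" "t \<notin> U" "\<forall>m. t \<noteq> cr m" and s: "s \<in> U"
  shows "\<not> t < s"
proof
  assume ts: "t < s"
  from s obtain m where sm: "s \<in> J m" unfolding U_def by blast
  then have "ereal s < c m" by (simp add: Ioo_e_def)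
  then have ex: "ereal t < c m" using ts by (metis less_ereal.simps(1) order.strict_trans)
  define j where "j = (LEAST j. ereal t < c j)"
  have tj: "ereal t < c j" unfolding j_def by (rule LeastI[where P="\<lambda>j. ereal t < c j", OF ex])
  have at: "a < ereal t" using t(1) by (simp add: Ioo_e_def)
  have j0: "j \<noteq> 0" using tj at c0 by (metis less_asym)
  have "\<not> ereal t < c (j - 1)" unfolding j_def
    by (rule not_less_Least) (use j0 in \<open>simp add: j_def\<close>)
  moreover have "c (j - 1) \<noteq> ereal t"
  proof (cases "j - 1 = 0")
    case True then show ?thesis using at c0 by auto
  next
    case False then show ?thesis using c_real[of "j - 1"] t(3) by auto
  qed
  ultimately have "c (j - 1) < ereal t" by auto
  then have "t \<in> J j" using tj by (simp add: Ioo_e_def)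
  then show False using t(2) unfolding U_def by blast
qed

lemma Gf_offU:
  assumes f: "L2 a b f"
  shows "AE t in LI. t \<notin> U \<longrightarrow> intop b \<phi> \<kappa> f t = 0"
  using AE_not_cr AE_space
proof eventually_elim
  case (elim t)
  then have t: "t \<in> I" by simp
  show ?case
  proof
    assume tU: "t \<notin> U"
    have "Gf f t = 0"
      unfolding Gf_def
    proof (rule integral_eq_zero_AE)
      show "AE s in LI. indicator {t<..} s *\<^sub>R (f s * cnj (\<kappa> s)) = 0"
        using \<kappa>_offU
      proof eventually_elim
        case (elim s)
        show ?case
        proof (cases "s \<in> U")
          case True
          then have "\<not> t < s" using notU[OF t tU] \<open>\<forall>m. t \<noteq> cr m\<close> by blast
          then show ?thesis by simp
        next
          case False then show ?thesis using elim by simp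
        qed
      qed
    qed
    then show "intop b \<phi> \<kappa> f t = 0" using t by (simp add: intop_eq)
  qed
qed

lemma meas_ind_J[measurable]: "(\<lambda>x. indicator (J m) x :: ennreal) \<in> borel_measurable LI"
  by (rule meas_ind_LI_enn) simp

lemma meas_ind_U[measurable]: "(\<lambda>x. indicator U x :: ennreal) \<in> borel_measurable LI"
  by (rule meas_ind_LI_enn) simp

lemma nqT_split:
  assumes f: "L2 a b f" and Tm[measurable]: "intop b \<phi> \<kappa> f \<in> borel_measurable LI"
  shows "nq (intop b \<phi> \<kappa> f) = (\<Sum>n. \<integral>\<^sup>+x. indicator (J n) x * ennreal (cmod (intop b \<phi> \<kappa> f x))^2 \<partial>LI)"
proof -
  have "nq (intop b \<phi> \<kappa> f) = (\<integral>\<^sup>+x. indicator U x * ennreal (cmod (intop b \<phi> \<kappa> f x))^2 \<partial>LI)"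
    unfolding nq_def
  proof (rule nn_integral_cong_AE)
    show "AE x in LI. ennreal (cmod (intop b \<phi> \<kappa> f x))^2 = indicator U x * ennreal (cmod (intop b \<phi> \<kappa> f x))^2"
      using Gf_offU[OF f] by eventually_elim (auto simp: indicator_def)
  qed
  also have "\<dots> = (\<integral>\<^sup>+x. (\<Sum>n. indicator (J n) x * ennreal (cmod (intop b \<phi> \<kappa> f x))^2) \<partial>LI)"
    by (rule nn_integral_cong) (simp add: sum_ind_J[symmetric] ennreal_suminf_multc)
  also have "\<dots> = (\<Sum>n. \<integral>\<^sup>+x. indicator (J n) x * ennreal (cmod (intop b \<phi> \<kappa> f x))^2 \<partial>LI)"
    by (rule nn_integral_suminf) measurable
  finally show ?thesis .
qed

definition am :: "(real \<Rightarrow> complex) \<Rightarrow> nat \<Rightarrow> real" where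
  "am f m = L2norm a b (\<lambda>x. of_real (indicator (J m) x) * f x)"

lemma am_nonneg: "0 \<le> am f m" by (simp add: am_def L2norm_nonneg)

lemma Gf_bound_J:
  assumes f: "L2 a b f" and n: "0 < n" and t: "t \<in> J n"
  shows "ennreal (cmod (Gf f t)) \<le> (\<Sum>m. ennreal (if n \<le> m then am f m * am \<kappa> m else 0))"
proof -
  have [measurable]: "f \<in> borel_measurable LI" using f by (simp add: L2_def)
  have int: "integrable LI (\<lambda>s. indicator {t<..} s *\<^sub>R (f s * cnj (\<kappa> s)))" by (rule Gf_integrand_int[OF f])
  have "ennreal (cmod (Gf f t)) \<le> (\<integral>\<^sup>+s. ennreal (norm (indicator {t<..} s *\<^sub>R (f s * cnj (\<kappa> s)))) \<partial>LI)"
    unfolding Gf_def by (rule integral_norm_bound_ennreal[OF int])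
  also have "\<dots> \<le> (\<integral>\<^sup>+s. (\<Sum>m. (if n \<le> m then indicator (J m) s else 0) * (ennreal (cmod (f s)) * ennreal (cmod (\<kappa> s)))) \<partial>LI)"
  proof (rule nn_integral_mono_AE)
    show "AE s in LI. ennreal (norm (indicator {t<..} s *\<^sub>R (f s * cnj (\<kappa> s)))) \<le>
        (\<Sum>m. (if n \<le> m then indicator (J m) s else 0) * (ennreal (cmod (f s)) * ennreal (cmod (\<kappa> s))))"
      using \<kappa>_offU
    proof eventually_elim
      case (elim s)
      show ?case
      proof (cases "t < s \<and> \<kappa> s \<noteq> 0")
        case False
        then show ?thesis by (auto simp: indicator_def)
      next
        case True
        then have "s \<in> U" using elim by blast
        then obtain m0 where m0: "s \<in> J m0" unfolding U_def by blast
        have "n \<le> m0"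
        proof (rule ccontr)
          assume "\<not> n \<le> m0"
          then have "c m0 \<le> c (n - 1)" by (intro c_le) simp
          moreover have "ereal s < c m0" using m0 by (simp add: Ioo_e_def)
          moreover have "c (n - 1) < ereal t" using t by (simp add: Ioo_e_def)
          moreover have "ereal t < ereal s" using True by simp
          ultimately show False by (meson less_le_trans order.strict_trans not_less_iff_gr_or_eq)
        qed
        have "ennreal (norm (indicator {t<..} s *\<^sub>R (f s * cnj (\<kappa> s)))) =
            (if n \<le> m0 then indicator (J m0) s else 0) * (ennreal (cmod (f s)) * ennreal (cmod (\<kappa> s)))"
          using True m0 \<open>n \<le> m0\<close> by (simp add: norm_mult ennreal_mult)
        also have "\<dots> \<le> (\<Sum>m. (if n \<le> m then indicator (J m) s else 0) * (ennreal (cmod (f s)) * ennreal (cmod (\<kappa> s))))"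
          using sum_le_suminf[OF summableI, of "{m0}" "\<lambda>m. (if n \<le> m then indicator (J m) s else 0) * (ennreal (cmod (f s)) * ennreal (cmod (\<kappa> s)))"]
          by simp
        finally show ?thesis .
      qed
    qed
  qed
  also have "\<dots> = (\<Sum>m. \<integral>\<^sup>+s. (if n \<le> m then indicator (J m) s else 0) * (ennreal (cmod (f s)) * ennreal (cmod (\<kappa> s))) \<partial>LI)"
    by (rule nn_integral_suminf) measurable
  also have "\<dots> \<le> (\<Sum>m. ennreal (if n \<le> m then am f m * am \<kappa> m else 0))"
  proof (rule suminf_le[OF _ summableI summableI])
    fix m
    show "(\<integral>\<^sup>+s. (if n \<le> m then indicator (J m) s else 0) * (ennreal (cmod (f s)) * ennreal (cmod (\<kappa> s))) \<partial>LI)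
        \<le> ennreal (if n \<le> m then am f m * am \<kappa> m else 0)"
    proof (cases "n \<le> m")
      case True
      have "(\<integral>\<^sup>+s. (if n \<le> m then indicator (J m) s else 0) * (ennreal (cmod (f s)) * ennreal (cmod (\<kappa> s))) \<partial>LI)
          = (\<integral>\<^sup>+s. ennreal (cmod (of_real (indicator (J m) s) * f s)) * ennreal (cmod (of_real (indicator (J m) s) * \<kappa> s)) \<partial>LI)"
        using True by (intro nn_integral_cong) (simp add: indicator_def)
      also have "\<dots> \<le> ennreal (am f m * am \<kappa> m)"
        unfolding am_def by (rule CS_nn) (simp_all add: L2_ind f \<kappa>_L2)
      finally show ?thesis using True by simp
    qed simp
  qed
  finally show ?thesis .
qed

end

lemma sum_CS:
  fixes x y :: "nat \<Rightarrow> real"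
  assumes "\<And>m. 0 \<le> x m" "\<And>m. 0 \<le> y m"
  shows "(\<Sum>m. ennreal (x m * y m))^2 \<le> (\<Sum>m. ennreal ((x m)^2)) * (\<Sum>m. ennreal ((y m)^2))"
proof -
  have "(\<integral>\<^sup>+m. ennreal (x m) * ennreal (y m) \<partial>count_space UNIV)^2 \<le>
      (\<integral>\<^sup>+m. ennreal (x m)^2 \<partial>count_space UNIV) * (\<integral>\<^sup>+m. ennreal (y m)^2 \<partial>count_space UNIV)"
    by (rule Cauchy_Schwarz_nn_integral) simp_all
  then show ?thesis using assms
    by (simp add: nn_integral_count_space_nat ennreal_mult ennreal_power)
qed

lemma geom_tail:
  fixes r :: real
  assumes "0 \<le> r" "r < 1"
  shows "(\<lambda>m. if n \<le> m then r^m else 0) sums (r^n / (1 - r))"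
proof -
  have "(\<lambda>i. r^i) sums (1 / (1 - r))" by (rule geometric_sums) (use assms in simp)
  from sums_mult[OF this, of "r^n"] have "(\<lambda>i. r^n * r^i) sums (r^n / (1 - r))" by simp
  define g where "g m = (if n \<le> m then r^m else 0)" for m
  have "(\<lambda>i. g (i + n)) = (\<lambda>i. r^n * r^i)" by (simp add: g_def power_add mult.commute fun_eq_iff)
  with \<open>(\<lambda>i. r^n * r^i) sums (r^n / (1 - r))\<close> have "(\<lambda>i. g (i + n)) sums (r^n / (1 - r))" by simp
  then have "g sums (r^n / (1 - r) + (\<Sum>i<n. g i))" by (rule sums_iff_shift[THEN iffD1])
  moreover have "(\<Sum>i<n. g i) = 0" by (simp add: g_def)
  ultimately show ?thesis by (simp add: g_def[abs_def])
qed

lemma geom_finite_bound: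
  fixes r :: real
  assumes "0 \<le> r" "r < 1"
  shows "(\<Sum>i<N. r^i) \<le> 1 / (1 - r)"
proof -
  have "(\<Sum>i<N. r^i) = (1 - r^N) / (1 - r)" using assms by (simp add: sum_gp_strict)
  also have "\<dots> \<le> 1 / (1 - r)" using assms by (intro divide_right_mono) simp_all
  finally show ?thesis .
qed

lemma inner_geom:
  fixes r A :: real
  assumes "0 \<le> r" "r < 1" "0 \<le> A"
  shows "(\<Sum>n. ennreal (if 0 < n \<and> n \<le> m then A * r^(m - n) else 0)) \<le> ennreal (A / (1 - r))"
proof -
  have "(\<Sum>n. ennreal (if 0 < n \<and> n \<le> m then A * r^(m - n) else 0)) \<le> (\<Sum>n. ennreal (if n \<le> m then A * r^(m - n) else 0))"
    by (intro suminf_le summableI ennreal_leI) (use assms in simp)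
  also have "\<dots> = (\<Sum>n<Suc m. ennreal (if n \<le> m then A * r^(m - n) else 0))"
    by (rule suminf_finite) auto
  also have "\<dots> = ennreal (\<Sum>n<Suc m. A * r^(m - n))"
    using assms by (subst sum_ennreal) (auto intro!: sum.cong)
  also have "(\<Sum>n<Suc m. A * r^(m - n)) = A * (\<Sum>n<Suc m. r^(Suc m - Suc n))"
    by (simp only: diff_Suc_Suc sum_distrib_left)
  also have "(\<Sum>n<Suc m. r^(Suc m - Suc n)) = (\<Sum>n<Suc m. r^n)"
    by (rule sum.nat_diff_reindex)
  also have "A * (\<Sum>n<Suc m. r^n) \<le> A * (1 / (1 - r))"
    by (rule mult_left_mono[OF geom_finite_bound[OF assms(1,2)] assms(3)])
  finally show ?thesis by (simp add: ennreal_leI)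
qed

lemma sum_swap_enn:
  fixes f :: "nat \<Rightarrow> nat \<Rightarrow> ennreal"
  shows "(\<Sum>n. \<Sum>m. f n m) = (\<Sum>m. \<Sum>n. f n m)"
proof -
  have "(\<Sum>n. \<Sum>m. f n m) = (\<Sum>n. \<integral>\<^sup>+m. f n m \<partial>count_space UNIV)"
    by (simp add: nn_integral_count_space_nat)
  also have "\<dots> = (\<integral>\<^sup>+m. (\<Sum>n. f n m) \<partial>count_space UNIV)"
    by (rule nn_integral_suminf[symmetric]) simp
  also have "\<dots> = (\<Sum>m. \<Sum>n. f n m)"
    by (simp add: nn_integral_count_space_nat)
  finally show ?thesis .
qed

context S5c begin

definition "rr = sqrt (1/2::real)"
definition "KK = sqrt K2"

lemma rr: "0 < rr" "rr < 1" "rr^2 = 1/2"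
  unfolding rr_def by simp_all

lemma KK: "0 \<le> KK" "KK^2 = K2"
  unfolding KK_def by simp_all

lemma am_\<kappa>: assumes "0 < m" shows "am \<kappa> m = KK * rr^m"
proof (rule power2_eq_imp_eq)
  have "(am \<kappa> m)^2 = (1/2)^m * K2" unfolding am_def by (rule kJ[OF assms])
  also have "\<dots> = (KK * rr^m)^2"
  proof -
    have "(rr^m)^2 = (1/2)^m" by (metis power_mult mult.commute rr(3))
    then show ?thesis by (simp add: power_mult_distrib KK(2) mult.commute)
  qed
  finally show "(am \<kappa> m)^2 = (KK * rr^m)^2" .
  show "0 \<le> am \<kappa> m" by (rule am_nonneg)
  show "0 \<le> KK * rr^m" using KK rr by simp
qed

lemma gJ_L2: assumes n: "0 < n" shows "L2 a b (\<lambda>x. of_real (indicator (J n) x) * \<phi> x)"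
proof -
  have rn: "a < ereal (cr n)" "ereal (cr n) < b" using cr_in[OF n] by auto
  have cn: "c n = ereal (cr n)" by (rule c_real[OF n])
  have gsub: "x \<in> J n \<Longrightarrow> x \<in> Ioo_e a (ereal (cr n))" for x
    using c_le[of 0 "n - 1"] c0 unfolding cn Ioo_e_def by (auto intro: order.strict_trans1)
  have geq: "of_real (indicator (J n) x) * \<phi> x = of_real (indicator (J n) x) * (of_real (indicator (Ioo_e a (ereal (cr n))) x) * \<phi> x)" for x
    using gsub[of x] by (simp add: indicator_def)
  show ?thesis unfolding geq by (rule L2_ind[OF _ \<phi>_loc[OF rn]]) simp
qed

lemma stepD:
  assumes n: "0 < n"
  shows "(\<Sum>m. ennreal (if n \<le> m then am f m * am \<kappa> m else 0))^2 \<le>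
     ennreal (KK * rr^n / (1 - rr)) * (\<Sum>m. ennreal (if n \<le> m then (am f m)^2 * (KK * rr^m) else 0))"
proof -
  define x where "x m = (if n \<le> m then am f m * sqrt (KK * rr^m) else 0)" for m
  define y where "y m = (if n \<le> m then sqrt (KK * rr^m) else 0)" for m
  have pos: "0 \<le> KK * rr^m" for m using KK rr by simp
  have "(\<Sum>m. ennreal (x m * y m))^2 \<le> (\<Sum>m. ennreal ((x m)^2)) * (\<Sum>m. ennreal ((y m)^2))"
    by (rule sum_CS) (auto simp: x_def y_def intro!: mult_nonneg_nonneg am_nonneg pos)
  moreover have "x m * y m = (if n \<le> m then am f m * am \<kappa> m else 0)" for m
    using pos[of m] n by (auto simp: x_def y_def am_\<kappa>)
  moreover have "(x m)^2 = (if n \<le> m then (am f m)^2 * (KK * rr^m) else 0)" for m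
    using pos[of m] by (auto simp: x_def power_mult_distrib)
  moreover have "(\<Sum>m. ennreal ((y m)^2)) = ennreal (KK * rr^n / (1 - rr))"
  proof -
    have "(y m)^2 = KK * (if n \<le> m then rr^m else 0)" for m
      using pos[of m] by (auto simp: y_def)
    moreover have "(\<lambda>m. KK * (if n \<le> m then rr^m else 0)) sums (KK * (rr^n / (1 - rr)))"
      by (rule sums_mult, rule geom_tail) (use rr in simp_all)
    ultimately show ?thesis
      by (simp only:) (rule suminf_ennreal_eq, use KK rr in simp_all)
  qed
  ultimately show ?thesis by (simp add: mult.commute)
qed

lemma sumA:
  assumes f: "L2 a b f"
  shows "(\<Sum>m. ennreal ((am f m)^2)) \<le> nq f"
proof -
  have [measurable]: "f \<in> borel_measurable LI" using f by (simp add: L2_def)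
  have "(\<Sum>m. ennreal ((am f m)^2)) = (\<Sum>m. \<integral>\<^sup>+x. indicator (J m) x * ennreal (cmod (f x))^2 \<partial>LI)"
    unfolding am_def by (simp add: L2_nq[OF L2_ind[OF _ f], symmetric] nq_ind)
  also have "\<dots> = (\<integral>\<^sup>+x. (\<Sum>m. indicator (J m) x * ennreal (cmod (f x))^2) \<partial>LI)"
    by (rule nn_integral_suminf[symmetric]) measurable
  also have "\<dots> \<le> nq f"
    unfolding nq_def
  proof (rule nn_integral_mono)
    fix x
    have "(\<Sum>m. indicator (J m) x * ennreal (cmod (f x))^2) = indicator U x * ennreal (cmod (f x))^2"
      by (simp only: ennreal_suminf_multc sum_ind_J)
    then show "(\<Sum>m. indicator (J m) x * ennreal (cmod (f x))^2) \<le> ennreal (cmod (f x))^2"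
      by (cases "x \<in> U") auto
  qed
  finally show ?thesis .
qed

end

context S5c begin

lemma real_ineq:
  assumes p: "0 \<le> p" and w: "p * (KK * rr^n) \<le> M0" and A: "0 \<le> A" and nm: "n \<le> m"
  shows "p^2 * (KK * rr^n / (1 - rr)) * (A * (KK * rr^m)) \<le> M0^2 / (1 - rr) * (A * rr^(m - n))"
proof -
  have r: "0 < rr" "rr < 1" using rr by auto
  have m: "rr^m = rr^n * rr^(m - n)" using nm by (simp add: power_add[symmetric])
  have w0: "0 \<le> p * (KK * rr^n)" using p KK r by simp
  have sq: "(p * (KK * rr^n))^2 \<le> M0^2" using w w0 by (rule power_mono)
  have "p^2 * (KK * rr^n / (1 - rr)) * (A * (KK * rr^m)) = (p * (KK * rr^n))^2 * (A * rr^(m - n) / (1 - rr))"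
    unfolding m by (simp add: power2_eq_square field_simps)
  also have "\<dots> \<le> M0^2 * (A * rr^(m - n) / (1 - rr))"
    using sq A r by (intro mult_right_mono) simp_all
  finally show ?thesis by (simp add: field_simps)
qed

lemma term_bound:
  assumes f: "L2 a b f"
    and M0: "\<And>n. 1 \<le> n \<Longrightarrow> am \<kappa> n * am \<phi> n \<le> M0"
  shows "(\<integral>\<^sup>+x. indicator (J n) x * ennreal (cmod (intop b \<phi> \<kappa> f x))^2 \<partial>LI) \<le>
     ennreal (M0^2 / (1 - rr)) * (\<Sum>m. ennreal (if 0 < n \<and> n \<le> m then (am f m)^2 * rr^(m - n) else 0))"
proof (cases "n = 0")
  case True
  then show ?thesis by simp
next
  case False
  then have n: "0 < n" by simp
  have [measurable]: "\<phi> \<in> borel_measurable LI" by simp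
  define Bn where "Bn = ennreal (KK * rr^n / (1 - rr)) * (\<Sum>m. ennreal (if n \<le> m then (am f m)^2 * (KK * rr^m) else 0))"
  have "(\<integral>\<^sup>+x. indicator (J n) x * ennreal (cmod (intop b \<phi> \<kappa> f x))^2 \<partial>LI) \<le>
      (\<integral>\<^sup>+x. indicator (J n) x * ennreal (cmod (\<phi> x))^2 * Bn \<partial>LI)"
  proof (rule nn_integral_mono)
    fix t assume "t \<in> space LI"
    then have tI: "t \<in> I" by simp
    show "indicator (J n) t * ennreal (cmod (intop b \<phi> \<kappa> f t))^2 \<le> indicator (J n) t * ennreal (cmod (\<phi> t))^2 * Bn"
    proof (cases "t \<in> J n")
      case True
      have "ennreal (cmod (intop b \<phi> \<kappa> f t))^2 = ennreal (cmod (\<phi> t))^2 * ennreal (cmod (Gf f t))^2"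
        using tI by (simp add: intop_eq norm_mult ennreal_mult power_mult_distrib)
      also have "\<dots> \<le> ennreal (cmod (\<phi> t))^2 * Bn"
      proof (rule mult_left_mono)
        have "ennreal (cmod (Gf f t))^2 \<le> (\<Sum>m. ennreal (if n \<le> m then am f m * am \<kappa> m else 0))^2"
          by (rule power_mono[OF Gf_bound_J[OF f n True]]) simp
        also have "\<dots> \<le> Bn" unfolding Bn_def by (rule stepD[OF n])
        finally show "ennreal (cmod (Gf f t))^2 \<le> Bn" .
      qed simp
      finally show ?thesis using True by simp
    qed simp
  qed
  also have "\<dots> = (\<integral>\<^sup>+x. indicator (J n) x * ennreal (cmod (\<phi> x))^2 \<partial>LI) * Bn"
    by (rule nn_integral_multc) measurable
  also have "(\<integral>\<^sup>+x. indicator (J n) x * ennreal (cmod (\<phi> x))^2 \<partial>LI) = ennreal ((am \<phi> n)^2)"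
    unfolding am_def L2_nq[OF gJ_L2[OF n], symmetric] nq_ind ..
  also have "ennreal ((am \<phi> n)^2) * Bn =
      (\<Sum>m. ennreal ((am \<phi> n)^2 * (KK * rr^n / (1 - rr)) * (if n \<le> m then (am f m)^2 * (KK * rr^m) else 0)))"
  proof -
    have "ennreal ((am \<phi> n)^2) * Bn = ennreal ((am \<phi> n)^2 * (KK * rr^n / (1 - rr))) *
        (\<Sum>m. ennreal (if n \<le> m then (am f m)^2 * (KK * rr^m) else 0))"
    proof -
      have e: "ennreal ((am \<phi> n)^2 * (KK * rr^n / (1 - rr))) = ennreal ((am \<phi> n)^2) * ennreal (KK * rr^n / (1 - rr))"
        by (rule ennreal_mult) (use KK rr in simp_all)
      show ?thesis unfolding Bn_def e by (simp only: mult.assoc)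
    qed
    also have "\<dots> = (\<Sum>m. ennreal ((am \<phi> n)^2 * (KK * rr^n / (1 - rr))) * ennreal (if n \<le> m then (am f m)^2 * (KK * rr^m) else 0))"
      by (rule ennreal_suminf_cmult[symmetric])
    also have "\<dots> = (\<Sum>m. ennreal ((am \<phi> n)^2 * (KK * rr^n / (1 - rr)) * (if n \<le> m then (am f m)^2 * (KK * rr^m) else 0)))"
    proof (rule suminf_cong)
      fix m
      show "ennreal ((am \<phi> n)^2 * (KK * rr^n / (1 - rr))) * ennreal (if n \<le> m then (am f m)^2 * (KK * rr^m) else 0) =
          ennreal ((am \<phi> n)^2 * (KK * rr^n / (1 - rr)) * (if n \<le> m then (am f m)^2 * (KK * rr^m) else 0))"
        by (rule ennreal_mult[symmetric]) (use KK rr in simp_all)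
    qed
    finally show ?thesis .
  qed
  also have "\<dots> \<le> (\<Sum>m. ennreal (M0^2 / (1 - rr) * (if 0 < n \<and> n \<le> m then (am f m)^2 * rr^(m - n) else 0)))"
  proof (rule suminf_le[OF _ summableI summableI], rule ennreal_leI)
    fix m
    show "(am \<phi> n)^2 * (KK * rr^n / (1 - rr)) * (if n \<le> m then (am f m)^2 * (KK * rr^m) else 0)
        \<le> M0^2 / (1 - rr) * (if 0 < n \<and> n \<le> m then (am f m)^2 * rr^(m - n) else 0)"
    proof (cases "n \<le> m")
      case True
      have "am \<phi> n * (KK * rr^n) \<le> M0" using M0[of n] n by (simp add: am_\<kappa>[OF n] mult.commute)
      then show ?thesis using True n real_ineq[OF am_nonneg _ zero_le_power2 True] by simp
    qed simp
  qed
  also have "\<dots> = ennreal (M0^2 / (1 - rr)) * (\<Sum>m. ennreal (if 0 < n \<and> n \<le> m then (am f m)^2 * rr^(m - n) else 0))"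
  proof -
    have "(\<Sum>m. ennreal (M0^2 / (1 - rr) * (if 0 < n \<and> n \<le> m then (am f m)^2 * rr^(m - n) else 0))) =
        (\<Sum>m. ennreal (M0^2 / (1 - rr)) * ennreal (if 0 < n \<and> n \<le> m then (am f m)^2 * rr^(m - n) else 0))"
    proof (rule suminf_cong)
      fix m
      show "ennreal (M0^2 / (1 - rr) * (if 0 < n \<and> n \<le> m then (am f m)^2 * rr^(m - n) else 0)) =
          ennreal (M0^2 / (1 - rr)) * ennreal (if 0 < n \<and> n \<le> m then (am f m)^2 * rr^(m - n) else 0)"
        by (rule ennreal_mult) (use rr in simp_all)
    qed
    then show ?thesis by simp
  qed
  finally show ?thesis .
qed

lemma part3:
  assumes "\<exists>M. \<forall>n\<ge>1. am \<kappa> n * am \<phi> n \<le> M"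
  shows "op_bounded a b (intop_dom a b \<phi> \<kappa>) (intop b \<phi> \<kappa>)"
proof -
  obtain M0 where M0: "\<And>n. 1 \<le> n \<Longrightarrow> am \<kappa> n * am \<phi> n \<le> M0" using assms by blast
  have M0p: "0 \<le> M0" using M0[of 1] am_nonneg[of \<kappa> 1] am_nonneg[of \<phi> 1]
    by (meson mult_nonneg_nonneg order_trans order_refl)
  have r: "0 < rr" "rr < 1" using rr by auto
  define C where "C = M0 / (1 - rr)"
  have C: "0 \<le> C" unfolding C_def using M0p r by simp
  show ?thesis unfolding op_bounded_def
  proof (intro exI[of _ C] ballI)
    fix f assume "f \<in> intop_dom a b \<phi> \<kappa>"
    then have f: "L2 a b f" and Tf: "L2 a b (intop b \<phi> \<kappa> f)" by (auto simp: intop_dom_def)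
    have Tm: "intop b \<phi> \<kappa> f \<in> borel_measurable LI" using Tf by (simp add: L2_def)
    define c1 where "c1 = M0^2 / (1 - rr)"
    have c1: "0 \<le> c1" unfolding c1_def using r by simp
    define g where "g n m = ennreal (if 0 < n \<and> n \<le> m then (am f m)^2 * rr^(m - n) else 0)" for n m
    have "nq (intop b \<phi> \<kappa> f) = (\<Sum>n. \<integral>\<^sup>+x. indicator (J n) x * ennreal (cmod (intop b \<phi> \<kappa> f x))^2 \<partial>LI)"
      by (rule nqT_split[OF f Tm])
    also have "\<dots> \<le> (\<Sum>n. ennreal c1 * (\<Sum>m. g n m))"
      unfolding c1_def g_def by (rule suminf_le[OF _ summableI summableI]) (rule term_bound[OF f M0])
    also have "\<dots> = ennreal c1 * (\<Sum>n. \<Sum>m. g n m)"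
      by (rule ennreal_suminf_cmult)
    also have "\<dots> = ennreal c1 * (\<Sum>m. \<Sum>n. g n m)"
      by (rule arg_cong[where f="\<lambda>x. ennreal c1 * x"], rule sum_swap_enn)
    also have "\<dots> \<le> ennreal c1 * (\<Sum>m. ennreal ((am f m)^2 / (1 - rr)))"
    proof (rule mult_left_mono[OF suminf_le[OF _ summableI summableI]])
      fix m show "(\<Sum>n. g n m) \<le> ennreal ((am f m)^2 / (1 - rr))"
        unfolding g_def by (rule inner_geom) (use r in simp_all)
    qed simp
    also have "(\<Sum>m. ennreal ((am f m)^2 / (1 - rr))) = ennreal (1 / (1 - rr)) * (\<Sum>m. ennreal ((am f m)^2))"
    proof -
      have "(\<Sum>m. ennreal ((am f m)^2 / (1 - rr))) = (\<Sum>m. ennreal (1 / (1 - rr)) * ennreal ((am f m)^2))"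
      proof (rule suminf_cong)
        fix m show "ennreal ((am f m)^2 / (1 - rr)) = ennreal (1 / (1 - rr)) * ennreal ((am f m)^2)"
          using r by (subst ennreal_mult[symmetric]) simp_all
      qed
      then show ?thesis by simp
    qed
    also have "ennreal c1 * (ennreal (1 / (1 - rr)) * (\<Sum>m. ennreal ((am f m)^2))) \<le> ennreal c1 * (ennreal (1 / (1 - rr)) * nq f)"
      by (intro mult_left_mono sumA[OF f]) simp_all
    also have "\<dots> = ennreal (C^2) * nq f"
    proof -
      have "ennreal c1 * ennreal (1 / (1 - rr)) = ennreal (C^2)"
        using r c1 by (simp add: ennreal_mult[symmetric] C_def c1_def power_divide power2_eq_square)
      then show ?thesis by (metis mult.assoc)
    qed
    finally show "L2norm a b (intop b \<phi> \<kappa> f) \<le> C * L2norm a b f"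
      by (rule nq_L2norm_le[OF Tf f _ C])
  qed
qed

end

theorem theorem5p2:
  fixes a b :: ereal and \<kappa> \<phi> :: "real \<Rightarrow> complex" and c :: "nat \<Rightarrow> ereal"
  assumes ab: "a < b"
    and \<kappa>_L2: "L2 a b \<kappa>"
    and \<phi>_meas: "\<phi> \<in> borel_measurable (lebesgue_on (Ioo_e a b))"
    and \<phi>_loc: "\<And>r. a < ereal r \<Longrightarrow> ereal r < b \<Longrightarrow>
                 L2 a b (\<lambda>x. of_real (indicator (Ioo_e a (ereal r)) x) * \<phi> x)"
    and c0: "c 0 = a"
    and c_mono: "\<And>n. c n < c (Suc n)"
    and c_lt: "\<And>n. c n < b"
    and c_norm: "\<And>n. (L2norm a b (\<lambda>x. of_real (indicator (Ioo_e (c n) b) x) * \<kappa> x))\<^sup>2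
                       = (1/2) ^ n * (L2norm a b \<kappa>)\<^sup>2"
  defines "\<omega> \<equiv> (\<lambda>n. L2norm a b (\<lambda>x. of_real (indicator (Ioo_e (c (n - 1)) (c n)) x) * \<kappa> x)
                     * L2norm a b (\<lambda>x. of_real (indicator (Ioo_e (c (n - 1)) (c n)) x) * \<phi> x))"
  shows "(op_bounded a b (intop_dom a b \<phi> \<kappa>) (intop b \<phi> \<kappa>)
            \<longrightarrow> re_op_bounded a b (intop_dom a b \<phi> \<kappa>) (intop b \<phi> \<kappa>))
       \<and> (re_op_bounded a b (intop_dom a b \<phi> \<kappa>) (intop b \<phi> \<kappa>)
            \<longrightarrow> (\<exists>M. \<forall>n\<ge>1. \<omega> n \<le> M))
       \<and> ((\<exists>M. \<forall>n\<ge>1. \<omega> n \<le> M)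
            \<longrightarrow> op_bounded a b (intop_dom a b \<phi> \<kappa>) (intop b \<phi> \<kappa>))"
proof -
  interpret S5c a b \<kappa> \<phi> c
    by (unfold_locales) (use assms in auto)
  have om: "\<omega> = (\<lambda>n. am \<kappa> n * am \<phi> n)" unfolding \<omega>_def am_def by (rule refl)
  show ?thesis
    unfolding om using part1 part2 part3 by (auto simp: am_def)
qed

end
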